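(* Let $(\mathfrak{g},\langle\cdot,\cdot\rangle)$ be a completely solvable unimodular Lorentzian Lie algebra such that the derived algebra $[\mathfrak{g},\mathfrak{g}]$ is degenerate (the restriction of $\langle\cdot,\cdot\rangle$ to it is degenerate). Then $\mathfrak{g}$ is Einstein if and only if it is (isometrically isomorphic to a Lorentzian Lie algebra) obtained by a double extension process from an abelian Euclidean Lie algebra with admissible parameters $(K,D,-\mathrm{tr}(D),b)$. In particular, if $\mathfrak{g}$ is Einstein then it is Ricci-flat.
   Context: A Lorentzian Lie algebra is a finite-dimensional real Lie algebra with a nondegenerate symmetric bilinear form of signature $(1,n-1)$. $\mathfrak{g}$ is completely solvable if there is a chain of ideals $0=I_0\subset I_1\subset\cdots\subset I_n=\mathfrak{g}$ with $\dim I_i=i$; unimodular means $\mathrm{tr}(\mathrm{ad}_u)=0$ for all $u$. Double extension of a Euclidean Lie algebra $(\mathfrak{g}_0,[\cdot,\cdot]_0,\langle\cdot,\cdot\rangle_0)$ with parameters $(K,D,\mu,b)$ ($K,D$ endomorphisms of $\mathfrak{g}_0$, $K$ skew-symmetric, $\mu\in\mathbb{R}$, $b\in\mathfrak{g}_0$): $\mathfrak{g}=\mathbb{R}e\oplus\mathfrak{g}_0\oplus\mathbb{R}\bar e$ with $\langle e,e\rangle=\langle\bar e,\bar e\rangle=0$, $\langle e,\bar e\rangle=1$, $\mathfrak{g}_0\perp\{e,\bar e\}$, $\langle\cdot,\cdot\rangle|_{\mathfrak{g}_0}=\langle\cdot,\cdot\rangle_0$, and skew-symmetric bracket $[\bar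 e,e]=\mu e$, $[\bar e,u]=D(u)+\langle b,u\rangle_0e$, $[u,v]=[u,v]_0+\langle K(u),v\rangle_0e$, $[e,u]=0$ ($u,v\in\mathfrak{g}_0$). For $\mathfrak{g}_0$ abelian, the parameters are called admissible when this bracket is a Lie bracket and the resulting Lorentzian Lie algebra is Einstein; equivalently, $KD+D^*K=\mu K$ and $4\mu\,\mathrm{tr}(D)-2\mathrm{tr}(D^2)-2\mathrm{tr}(DD^* )-\mathrm{tr}(K^2)=0$ (adjoints with respect to $\langle\cdot,\cdot\rangle_0$). Einstein means the Ricci operator $\mathrm{Ric}$ of the Levi-Civita connection (given by $2\langle \mathrm{L}_uv,w\rangle=\langle[u,v],w\rangle+\langle[w,u],v\rangle+\langle[w,v],u\rangle$, curvature $\mathrm{L}_{[u,v]}-[\mathrm{L}_u,\mathrm{L}_v]$, $\langle\mathrm{Ric}(u),v\rangle=\mathrm{tr}(w\mapsto K(u,w)v)$) equals $\lambda\mathrm{Id}$ for some $\lambda$; Ricci-flat means $\mathrm{Ric}=0$. *)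

theory Defs
  imports "HOL-Analysis.Analysis"
begin

text \<open>A finite-dimensional real Lie algebra is modelled on a Euclidean-space type 'v
 (used only as a finite-dimensional real vector space; its built-in inner product
 plays no role except for computing traces, which are basis independent).\<close>

definition lin_trace :: "('v::euclidean_space \<Rightarrow> 'v) \<Rightarrow> real" where
  "lin_trace f = (\<Sum>b\<in>Basis. inner (f b) b)"

definition lie_bracket :: "('v::euclidean_space \<Rightarrow> 'v \<Rightarrow> 'v) \<Rightarrow> bool" where
  "lie_bracket br \<longleftrightarrow> bilinear br \<and> (\<forall>x y. br x y = - br y x)
     \<and> (\<forall>x y z. br x (br y z) + br y (br z x) + br z (br x y) = 0)"

definition nondegenerate_form :: "('v::euclidean_space \<Rightarrow> 'v \<Rightarrow> real) \<Rightarrow> bool" where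
  "nondegenerate_form g \<longleftrightarrow> (\<forall>x. (\<forall>y. g x y = 0) \<longrightarrow> x = 0)"

definition lorentzian_form :: "('v::euclidean_space \<Rightarrow> 'v \<Rightarrow> real) \<Rightarrow> bool" where
  "lorentzian_form g \<longleftrightarrow> bilinear g \<and> (\<forall>x y. g x y = g y x) \<and> nondegenerate_form g
     \<and> (\<exists>t. g t t < 0 \<and> (\<forall>x. g x t = 0 \<and> x \<noteq> 0 \<longrightarrow> g x x > 0))"

definition lorentzian_lie_algebra ::
  "('v::euclidean_space \<Rightarrow> 'v \<Rightarrow> 'v) \<Rightarrow> ('v \<Rightarrow> 'v \<Rightarrow> real) \<Rightarrow> bool" where
  "lorentzian_lie_algebra br g \<longleftrightarrow> lie_bracket br \<and> lorentzian_form g"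

definition lie_ideal :: "('v::euclidean_space \<Rightarrow> 'v \<Rightarrow> 'v) \<Rightarrow> 'v set \<Rightarrow> bool" where
  "lie_ideal br I \<longleftrightarrow> subspace I \<and> (\<forall>x y. y \<in> I \<longrightarrow> br x y \<in> I)"

definition completely_solvable :: "('v::euclidean_space \<Rightarrow> 'v \<Rightarrow> 'v) \<Rightarrow> bool" where
  "completely_solvable br \<longleftrightarrow> (\<exists>I :: nat \<Rightarrow> 'v set.
     (\<forall>i\<le>DIM('v). lie_ideal br (I i) \<and> dim (I i) = i)
     \<and> (\<forall>i<DIM('v). I i \<subseteq> I (Suc i)))"

definition unimodular :: "('v::euclidean_space \<Rightarrow> 'v \<Rightarrow> 'v) \<Rightarrow> bool" where
  "unimodular br \<longleftrightarrow> (\<forall>u. lin_trace (br u) = 0)"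

definition derived_algebra :: "('v::euclidean_space \<Rightarrow> 'v \<Rightarrow> 'v) \<Rightarrow> 'v set" where
  "derived_algebra br = span {br x y | x y. True}"

definition degenerate_on :: "('v::euclidean_space \<Rightarrow> 'v \<Rightarrow> real) \<Rightarrow> 'v set \<Rightarrow> bool" where
  "degenerate_on g S \<longleftrightarrow> (\<exists>x\<in>S. x \<noteq> 0 \<and> (\<forall>y\<in>S. g x y = 0))"

definition levi_civita ::
  "('v::euclidean_space \<Rightarrow> 'v \<Rightarrow> 'v) \<Rightarrow> ('v \<Rightarrow> 'v \<Rightarrow> real) \<Rightarrow> 'v \<Rightarrow> 'v \<Rightarrow> 'v" where
  "levi_civita br g u v = (THE z. \<forall>w. 2 * g z w = g (br u v) w + g (br w u) v + g (br w v) u)"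

definition curvature ::
  "('v::euclidean_space \<Rightarrow> 'v \<Rightarrow> 'v) \<Rightarrow> ('v \<Rightarrow> 'v \<Rightarrow> real) \<Rightarrow> 'v \<Rightarrow> 'v \<Rightarrow> 'v \<Rightarrow> 'v" where
  "curvature br g u v w = (let L = levi_civita br g in
      L (br u v) w - (L u (L v w) - L v (L u w)))"

definition ricci_form ::
  "('v::euclidean_space \<Rightarrow> 'v \<Rightarrow> 'v) \<Rightarrow> ('v \<Rightarrow> 'v \<Rightarrow> real) \<Rightarrow> 'v \<Rightarrow> 'v \<Rightarrow> real" where
  "ricci_form br g u v = lin_trace (\<lambda>w. curvature br g u w v)"

text \<open>Ric = \<lambda> Id, expressed through the (nondegenerate) metric: <Ric u, v> = \<lambda> <u,v>.\<close>
definition einstein :: "('v::euclidean_space \<Rightarrow> 'v \<Rightarrow> 'v) \<Rightarrow> ('v \<Rightarrow> 'v \<Rightarrow> real) \<Rightarrow> bool" where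
  "einstein br g \<longleftrightarrow> (\<exists>c::real. \<forall>u v. ricci_form br g u v = c * g u v)"

definition ricci_flat :: "('v::euclidean_space \<Rightarrow> 'v \<Rightarrow> 'v) \<Rightarrow> ('v \<Rightarrow> 'v \<Rightarrow> real) \<Rightarrow> bool" where
  "ricci_flat br g \<longleftrightarrow> (\<forall>u v. ricci_form br g u v = 0)"

text \<open>Double extension of the abelian Euclidean Lie algebra 'w (inner product = \<bullet>).
 An element (a, u, c) stands for a e + u + c \<bar>e.\<close>
definition dext_bracket ::
  "('w::euclidean_space \<Rightarrow> 'w) \<Rightarrow> ('w \<Rightarrow> 'w) \<Rightarrow> real \<Rightarrow> 'w
    \<Rightarrow> real \<times> 'w \<times> real \<Rightarrow> real \<times> 'w \<times> real \<Rightarrow> real \<times> 'w \<times> real" where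
  "dext_bracket K D \<mu> b x y = (case x of (a1, u1, c1) \<Rightarrow> case y of (a2, u2, c2) \<Rightarrow>
     (\<mu> * (c1 * a2 - a1 * c2) + c1 * inner b u2 - c2 * inner b u1 + inner (K u1) u2,
      c1 *\<^sub>R D u2 - c2 *\<^sub>R D u1,
      0))"

definition dext_form ::
  "real \<times> ('w::euclidean_space) \<times> real \<Rightarrow> real \<times> 'w \<times> real \<Rightarrow> real" where
  "dext_form x y = (case x of (a1, u1, c1) \<Rightarrow> case y of (a2, u2, c2) \<Rightarrow>
     a1 * c2 + c1 * a2 + inner u1 u2)"

definition admissible ::
  "('w::euclidean_space \<Rightarrow> 'w) \<Rightarrow> ('w \<Rightarrow> 'w) \<Rightarrow> real \<Rightarrow> 'w \<Rightarrow> bool" where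
  "admissible K D \<mu> b \<longleftrightarrow> linear K \<and> linear D \<and> (\<forall>u v. inner (K u) v = - inner u (K v))
     \<and> lie_bracket (dext_bracket K D \<mu> b) \<and> einstein (dext_bracket K D \<mu> b) dext_form"

definition isometric_lie_iso ::
  "('v::euclidean_space \<Rightarrow> 'v \<Rightarrow> 'v) \<Rightarrow> ('v \<Rightarrow> 'v \<Rightarrow> real)
   \<Rightarrow> ('u::euclidean_space \<Rightarrow> 'u \<Rightarrow> 'u) \<Rightarrow> ('u \<Rightarrow> 'u \<Rightarrow> real) \<Rightarrow> ('v \<Rightarrow> 'u) \<Rightarrow> bool" where
  "isometric_lie_iso br g br' g' \<phi> \<longleftrightarrow> linear \<phi> \<and> bij \<phi>
     \<and> (\<forall>x y. \<phi> (br x y) = br' (\<phi> x) (\<phi> y)) \<and> (\<forall>x y. g' (\<phi> x) (\<phi> y) = g x y)"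

end

theory Submission
  imports Defs
begin

lemma bil_lin1: "bilinear h \<Longrightarrow> linear (\<lambda>x. h x y)" by (simp add: bilinear_def)
lemma bil_lin2: "bilinear h \<Longrightarrow> linear (\<lambda>y. h x y)" by (simp add: bilinear_def)

lemma lin_sum_scale:
  assumes "linear f"
  shows "f (\<Sum>i\<in>A. c i *\<^sub>R v i) = (\<Sum>i\<in>A. c i *\<^sub>R f (v i))"
  by (simp add: linear_sum[OF assms] linear_scale[OF assms])

lemma trace_frame:
  fixes f :: "'a::euclidean_space \<Rightarrow> 'a" and x :: "'j \<Rightarrow> 'a"
  assumes fin: "finite J" and exp: "\<And>y. y = (\<Sum>j\<in>J. c j y *\<^sub>R x j)"
    and cl: "\<And>j. linear (c j)" and fl: "linear f"
  shows "lin_trace f = (\<Sum>j\<in>J. c j (f (x j)))"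
proof -
  have "lin_trace f = (\<Sum>b\<in>Basis. inner (\<Sum>j\<in>J. c j (f b) *\<^sub>R x j) b)"
    unfolding lin_trace_def by (subst exp[of "f b" for b], rule refl)
  also have "\<dots> = (\<Sum>b\<in>Basis. \<Sum>j\<in>J. c j (f b) * inner (x j) b)"
    by (simp add: inner_sum_left)
  also have "\<dots> = (\<Sum>j\<in>J. \<Sum>b\<in>Basis. c j (f b) * inner (x j) b)" by (rule sum.swap)
  also have "\<dots> = (\<Sum>j\<in>J. c j (f (x j)))"
  proof (rule sum.cong[OF refl])
    fix j
    have lc: "linear (\<lambda>y. c j (f y))" using cl fl by (simp add: linear_compose[unfolded o_def])
    have "c j (f (x j)) = c j (f (\<Sum>b\<in>Basis. inner (x j) b *\<^sub>R b))"
      by (simp add: euclidean_representation)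
    also have "\<dots> = (\<Sum>b\<in>Basis. inner (x j) b * c j (f b))"
      using lin_sum_scale[OF lc] by simp
    finally show "(\<Sum>b\<in>Basis. c j (f b) * inner (x j) b) = c j (f (x j))"
      by (simp add: mult.commute)
  qed
  finally show ?thesis .
qed

lemma trace_transfer:
  fixes \<phi> :: "'a::euclidean_space \<Rightarrow> 'b::euclidean_space" and F :: "'b \<Rightarrow> 'b"
  assumes lp: "linear \<phi>" and lq: "linear \<psi>" and inv1: "\<And>y. \<phi> (\<psi> y) = y"
    and fl: "linear F"
  shows "lin_trace F = lin_trace (\<lambda>w. \<psi> (F (\<phi> w)))"
proof -
  have exp: "y = (\<Sum>b\<in>Basis. inner (\<psi> y) b *\<^sub>R \<phi> b)" for y
  proof -
    have "y = \<phi> (\<psi> y)" by (simp add: inv1)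
    also have "\<dots> = \<phi> (\<Sum>b\<in>Basis. inner (\<psi> y) b *\<^sub>R b)" by (simp add: euclidean_representation)
    also have "\<dots> = (\<Sum>b\<in>Basis. inner (\<psi> y) b *\<^sub>R \<phi> b)"
      by (rule lin_sum_scale[OF lp])
    finally show ?thesis .
  qed
  have cl: "linear (\<lambda>y. inner (\<psi> y) b)" for b :: 'a
    using lq by (simp add: linear_iff inner_add_left)
  have "lin_trace F = (\<Sum>b\<in>Basis. inner (\<psi> (F (\<phi> b))) b)"
    by (rule trace_frame[where c="\<lambda>b y. inner (\<psi> y) b", OF finite_Basis exp cl fl])
  then show ?thesis by (simp add: lin_trace_def)
qed

lemma trace_comm:
  fixes f h :: "'a::euclidean_space \<Rightarrow> 'a"
  assumes fl: "linear f" and hl: "linear h"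
  shows "lin_trace (\<lambda>w. f (h w)) = lin_trace (\<lambda>w. h (f w))"
proof -
  have 1: "lin_trace (\<lambda>w. f (h w)) = (\<Sum>b\<in>Basis. \<Sum>c\<in>Basis. inner (h b) c * inner (f c) b)"
  proof -
    have "f (h b) = (\<Sum>c\<in>Basis. inner (h b) c *\<^sub>R f c)" for b
    proof -
      have "f (h b) = f (\<Sum>c\<in>Basis. inner (h b) c *\<^sub>R c)" by (simp add: euclidean_representation)
      also have "\<dots> = (\<Sum>c\<in>Basis. inner (h b) c *\<^sub>R f c)"
        by (rule lin_sum_scale[OF fl])
      finally show ?thesis .
    qed
    then show ?thesis unfolding lin_trace_def by (simp add: inner_sum_left)
  qed
  have 2: "lin_trace (\<lambda>w. h (f w)) = (\<Sum>b\<in>Basis. \<Sum>c\<in>Basis. inner (f b) c * inner (h c) b)"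
  proof -
    have "h (f b) = (\<Sum>c\<in>Basis. inner (f b) c *\<^sub>R h c)" for b
    proof -
      have "h (f b) = h (\<Sum>c\<in>Basis. inner (f b) c *\<^sub>R c)" by (simp add: euclidean_representation)
      also have "\<dots> = (\<Sum>c\<in>Basis. inner (f b) c *\<^sub>R h c)"
        by (rule lin_sum_scale[OF hl])
      finally show ?thesis .
    qed
    then show ?thesis unfolding lin_trace_def by (simp add: inner_sum_left)
  qed
  show ?thesis unfolding 1 2 by (subst sum.swap) (simp add: mult.commute)
qed

lemma lin_trace_add: "lin_trace (\<lambda>w. f w + h w) = lin_trace f + lin_trace h"
  by (simp add: lin_trace_def inner_add_left sum.distrib)
lemma lin_trace_scale: "lin_trace (\<lambda>w. c *\<^sub>R f w) = c * lin_trace f"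
  by (simp add: lin_trace_def sum_distrib_left)

lemma flag_step:
  fixes A :: "'a::euclidean_space \<Rightarrow> 'a"
  assumes sP: "subspace P" and sT: "subspace T" and PT: "P \<subseteq> T"
    and dP: "dim T = dim P + 1"
    and qT: "q \<in> T" and qn: "norm q = 1" and qo: "\<And>y. y \<in> P \<Longrightarrow> inner q y = 0"
    and lA: "linear A" and AT: "\<And>y. y \<in> T \<Longrightarrow> A y \<in> T" and AP: "\<And>y. y \<in> P \<Longrightarrow> A y \<in> P"
  shows "inner (A (A q)) q \<ge> 0"
proof -
  have qq: "inner q q = 1" using qn by (simp add: norm_eq_1)
  have qnP: "q \<notin> span P" using qo[of q] qq sP by (auto simp: span_eq_iff[THEN iffD2, OF sP])
  have sub: "span (insert q P) \<subseteq> T" using qT PT sT by (intro span_minimal) auto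
  have "dim (insert q P) = dim P + 1" using qnP by (simp add: dim_insert)
  then have "span (insert q P) = T"
    using sub sT dP by (intro subspace_dim_equal) (auto simp: subspace_span)
  moreover have "A q \<in> T" using AT qT by simp
  ultimately have "A q \<in> span (insert q P)" by simp
  then obtain k where k: "A q - k *\<^sub>R q \<in> span P" by (auto simp: span_insert)
  define r where "r = A q - k *\<^sub>R q"
  have rP: "r \<in> P" using k span_eq_iff[THEN iffD2, OF sP] by (simp add: r_def)
  have Aq: "A q = k *\<^sub>R q + r" by (simp add: r_def)
  have "A (A q) = k *\<^sub>R A q + A r" using lA by (simp add: Aq linear_add linear_scale)
  then have "inner (A (A q)) q = k * inner (A q) q + inner (A r) q" by (simp add: inner_add_left)
  also have "inner (A r) q = 0" using qo[OF AP[OF rP]] by (simp add: inner_commute)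
  also have "inner (A q) q = k" using qo[OF rP] qq by (simp add: Aq inner_add_left inner_add_right inner_commute)
  finally show ?thesis by simp
qed

lemma cs_sq_nonneg:
  fixes br :: "'a::euclidean_space \<Rightarrow> 'a \<Rightarrow> 'a"
  assumes bil: "bilinear br" and cs: "completely_solvable br"
  shows "lin_trace (\<lambda>w. br x (br x w)) \<ge> 0"
proof -
  let ?n = "DIM('a)"
  obtain I where I: "\<And>i. i \<le> ?n \<Longrightarrow> lie_ideal br (I i) \<and> dim (I i) = i"
    and Ic: "\<And>i. i < ?n \<Longrightarrow> I i \<subseteq> I (Suc i)"
    using cs unfolding completely_solvable_def by blast
  have sI: "subspace (I i)" if "i \<le> ?n" for i using I[OF that] by (simp add: lie_ideal_def)
  have idI: "br z y \<in> I i" if "i \<le> ?n" "y \<in> I i" for i z y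
    using I[OF that(1)] that(2) by (simp add: lie_ideal_def)
  have dI: "dim (I i) = i" if "i \<le> ?n" for i using I[OF that] by simp
  have mono: "j \<le> k \<Longrightarrow> k \<le> ?n \<Longrightarrow> I j \<subseteq> I k" for j k
  proof (induction k)
    case 0 then show ?case by simp
  next
    case (Suc k)
    show ?case
    proof (cases "j = Suc k")
      case True then show ?thesis by simp
    next
      case False
      then have "I j \<subseteq> I k" using Suc by simp
      also have "I k \<subseteq> I (Suc k)" using Ic Suc by simp
      finally show ?thesis .
    qed
  qed
  have exq: "\<exists>q. q \<in> I i \<and> norm q = 1 \<and> (\<forall>y\<in>I (i - 1). inner q y = 0)"
    if i: "1 \<le> i" "i \<le> ?n" for i
  proof -
    have ss: "span (I (i - 1)) \<subset> span (I i)"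
    proof -
      have le: "I (i - 1) \<subseteq> I i" using mono[of "i - 1" i] i by simp
      have "dim (I (i - 1)) \<noteq> dim (I i)" using dI[of "i - 1"] dI[of i] i by simp
      then have "I (i - 1) \<noteq> I i" by metis
      then have ps: "I (i - 1) \<subset> I i" using le by auto
      have e1: "span (I (i - 1)) = I (i - 1)" using sI[of "i - 1"] i by (simp only: span_eq_iff)
      have e2: "span (I i) = I i" using sI[of i] i by (simp only: span_eq_iff)
      show ?thesis using ps by (metis e1 e2)
    qed
    obtain x where x: "x \<noteq> 0" "x \<in> span (I i)" "\<And>y. y \<in> span (I (i - 1)) \<Longrightarrow> orthogonal x y"
      using orthogonal_to_subspace_exists_gen[OF ss] by metis
    have e1: "span (I (i - 1)) = I (i - 1)" using sI[of "i - 1"] i by (simp only: span_eq_iff)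
    have e2: "span (I i) = I i" using sI[of i] i by (simp only: span_eq_iff)
    have xI: "x \<in> I i" using x(2) e2 by simp
    have "x /\<^sub>R norm x \<in> I i" using subspace_scale[OF sI[of i] xI] i by simp
    moreover have xo: "inner x y = 0" if "y \<in> I (i - 1)" for y
      using x(3)[OF span_base[OF that]] by (simp add: orthogonal_def)
    ultimately show ?thesis
      using x(1)
      by (intro exI[of _ "x /\<^sub>R norm x"]) auto
  qed
  define q where "q i = (SOME q. q \<in> I i \<and> norm q = 1 \<and> (\<forall>y\<in>I (i - 1). inner q y = 0))" for i
  have qp: "q i \<in> I i \<and> norm (q i) = 1 \<and> (\<forall>y\<in>I (i - 1). inner (q i) y = 0)"
    if "1 \<le> i" "i \<le> ?n" for i
    unfolding q_def by (rule someI_ex[OF exq[OF that]])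
  have qorth: "inner (q i) (q j) = 0" if "j < i" "1 \<le> j" "i \<le> ?n" for i j
  proof -
    have "q j \<in> I j" using qp[of j] that by simp
    also have "I j \<subseteq> I (i - 1)" using mono[of j "i - 1"] that by simp
    finally show ?thesis using qp[of i] that by simp
  qed
  have qq: "inner (q i) (q i) = 1" if "1 \<le> i" "i \<le> ?n" for i
    using qp[OF that] by (simp add: norm_eq_1)
  have inj: "inj_on q {1..?n}"
  proof (rule inj_onI)
    fix i j assume ij: "i \<in> {1..?n}" "j \<in> {1..?n}" "q i = q j"
    show "i = j"
    proof (rule ccontr)
      assume "i \<noteq> j"
      then consider "j < i" | "i < j" by linarith
      then show False
        using qorth[of j i] qorth[of i j] qq[of i] ij by cases auto
    qed
  qed
  let ?Q = "q ` {1..?n}"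
  have po: "pairwise orthogonal ?Q"
    unfolding pairwise_def orthogonal_def
  proof (clarify)
    fix i j assume "i \<in> {1..?n}" "j \<in> {1..?n}" "q i \<noteq> q j"
    then have "i \<noteq> j" by auto
    then consider "j < i" | "i < j" by linarith
    then show "inner (q i) (q j) = 0"
      using qorth[of j i] qorth[of i j] \<open>i \<in> _\<close> \<open>j \<in> _\<close> by cases (auto simp: inner_commute)
  qed
  have n0: "0 \<notin> ?Q" using qq by force
  have indep: "independent ?Q" by (rule pairwise_orthogonal_independent[OF po n0])
  have cardQ: "card ?Q = dim (UNIV :: 'a set)" using inj by (simp add: card_image)
  have spanQ: "UNIV \<subseteq> span ?Q" using card_eq_dim[of ?Q UNIV] cardQ indep by simp
  have expQ: "y = (\<Sum>v\<in>?Q. inner y v *\<^sub>R v)" for y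
  proof -
    have "(\<Sum>v\<in>?Q. inner y v *\<^sub>R v) = y"
    proof (rule orthonormal_basis_expand[OF po])
      show "norm v = 1" if "v \<in> ?Q" for v using that qp by auto
      show "y \<in> span ?Q" using spanQ by auto
    qed simp
    then show ?thesis by simp
  qed
  have exp: "y = (\<Sum>i\<in>{1..?n}. inner y (q i) *\<^sub>R q i)" for y
    using expQ[of y] sum.reindex[OF inj, of "\<lambda>v. inner y v *\<^sub>R v"] by simp
  have lA: "linear (br x)" using bil by (simp add: bilinear_def)
  have lA2: "linear (\<lambda>w. br x (br x w))" using lA by (simp add: linear_compose[unfolded o_def])
  have cl: "linear (\<lambda>y. inner y (q i))" for i by (simp add: linear_iff inner_add_left)
  have tr: "lin_trace (\<lambda>w. br x (br x w)) = (\<Sum>i\<in>{1..?n}. inner (br x (br x (q i))) (q i))"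
    by (rule trace_frame[where c="\<lambda>i y. inner y (q i)", OF finite_atLeastAtMost exp cl lA2])
  have "inner (br x (br x (q i))) (q i) \<ge> 0" if "i \<in> {1..?n}" for i
  proof -
    have i: "1 \<le> i" "i \<le> ?n" "i - 1 \<le> ?n" using that by auto
    show ?thesis
    proof (rule flag_step[where P="I (i - 1)" and T="I i"])
      show "subspace (I (i - 1))" using sI[OF i(3)] .
      show "subspace (I i)" using sI[OF i(2)] .
      show "I (i - 1) \<subseteq> I i" using mono[of "i - 1" i] i by simp
      show "dim (I i) = dim (I (i - 1)) + 1" using dI[OF i(2)] dI[OF i(3)] i by simp
      show "q i \<in> I i" "norm (q i) = 1" using qp[OF i(1,2)] by auto
      show "inner (q i) y = 0" if "y \<in> I (i - 1)" for y using qp[OF i(1,2)] that by auto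
      show "linear (br x)" by (rule lA)
      show "br x y \<in> I i" if "y \<in> I i" for y using idI[OF i(2) that] .
      show "br x y \<in> I (i - 1)" if "y \<in> I (i - 1)" for y using idI[OF i(3) that] .
    qed
  qed
  then show ?thesis unfolding tr by (intro sum_nonneg) auto
qed




locale rbase =
  fixes br :: "'u::euclidean_space \<Rightarrow> 'u \<Rightarrow> 'u" and S :: "'u \<Rightarrow> 'u"
  assumes bil: "bilinear br" and anti: "\<And>x y. br x y = - br y x"
    and Slin: "linear S" and SS[simp]: "\<And>x. S (S x) = x"
    and Sadj: "\<And>x y. inner (S x) y = inner x (S y)"
    and SB: "\<And>b. b \<in> Basis \<Longrightarrow> S b \<in> Basis"
begin

definition gg :: "'u \<Rightarrow> 'u \<Rightarrow> real" where "gg x y = inner x (S y)"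

lemma S_add[simp]: "S (x + y) = S x + S y" using Slin by (simp add: linear_add)
lemma S_scale[simp]: "S (c *\<^sub>R x) = c *\<^sub>R S x" using Slin by (simp add: linear_scale)
lemma S_diff[simp]: "S (x - y) = S x - S y" using Slin by (simp add: linear_diff)
lemma S_neg[simp]: "S (- x) = - S x" using Slin by (simp add: linear_neg)
lemma S_zero[simp]: "S 0 = 0" using Slin by (simp add: linear_0)
lemma S_sum: "S (sum f A) = (\<Sum>a\<in>A. S (f a))" using Slin by (simp add: linear_sum)

lemma gg_sym: "gg x y = gg y x"
  unfolding gg_def by (metis Sadj inner_commute)

lemma gg_add_left[simp]: "gg (x + y) z = gg x z + gg y z" by (simp add: gg_def inner_add_left)
lemma gg_add_right[simp]: "gg z (x + y) = gg z x + gg z y" by (simp add: gg_def inner_add_right)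
lemma gg_diff_left[simp]: "gg (x - y) z = gg x z - gg y z" by (simp add: gg_def inner_diff_left)
lemma gg_diff_right[simp]: "gg z (x - y) = gg z x - gg z y" by (simp add: gg_def inner_diff_right)
lemma gg_scale_left[simp]: "gg (c *\<^sub>R x) z = c * gg x z" by (simp add: gg_def)
lemma gg_scale_right[simp]: "gg z (c *\<^sub>R x) = c * gg z x" by (simp add: gg_def)
lemma gg_neg_left[simp]: "gg (- x) z = - gg x z" by (simp add: gg_def)
lemma gg_neg_right[simp]: "gg z (- x) = - gg z x" by (simp add: gg_def)
lemma gg_zero_left[simp]: "gg 0 z = 0" by (simp add: gg_def)
lemma gg_zero_right[simp]: "gg z 0 = 0" by (simp add: gg_def)
lemma gg_sum_left: "gg (sum f A) z = (\<Sum>a\<in>A. gg (f a) z)" by (simp add: gg_def inner_sum_left)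
lemma gg_sum_right: "gg z (sum f A) = (\<Sum>a\<in>A. gg z (f a))"
  by (simp add: gg_def S_sum inner_sum_right)
lemma gg_SS: "gg x (S y) = inner x y" by (simp add: gg_def)

lemma br_add_left[simp]: "br (x + y) z = br x z + br y z" using bil by (rule bilinear_ladd)
lemma br_add_right[simp]: "br z (x + y) = br z x + br z y" using bil by (rule bilinear_radd)
lemma br_diff_left[simp]: "br (x - y) z = br x z - br y z" using bil by (rule bilinear_lsub)
lemma br_diff_right[simp]: "br z (x - y) = br z x - br z y" using bil by (rule bilinear_rsub)
lemma br_scale_left[simp]: "br (c *\<^sub>R x) z = c *\<^sub>R br x z" using bil by (rule bilinear_lmul)
lemma br_scale_right[simp]: "br z (c *\<^sub>R x) = c *\<^sub>R br z x" using bil by (rule bilinear_rmul)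
lemma br_neg_left[simp]: "br (- x) z = - br x z" using bil by (rule bilinear_lneg)
lemma br_neg_right[simp]: "br z (- x) = - br z x" using bil by (rule bilinear_rneg)
lemma br_zero_left[simp]: "br 0 z = 0" using bil by (rule bilinear_lzero)
lemma br_zero_right[simp]: "br z 0 = 0" using bil by (rule bilinear_rzero)
lemma br_sum_left: "br (sum f A) z = (\<Sum>a\<in>A. br (f a) z)"
  using linear_sum[OF bil_lin1[OF bil, of z], of f A] by simp
lemma br_sum_right: "br z (sum f A) = (\<Sum>a\<in>A. br z (f a))"
  using linear_sum[OF bil_lin2[OF bil, of z], of f A] by simp

lemma sum_S: "(\<Sum>k\<in>Basis. h k) = (\<Sum>k\<in>Basis. h (S k))"
  by (rule sum.reindex_bij_witness[where i=S and j=S]) (auto simp: SB)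

lemma expand: "x = (\<Sum>k\<in>Basis. gg x (S k) *\<^sub>R k)"
  by (simp add: gg_SS euclidean_representation)

lemma expand2: "x = (\<Sum>k\<in>Basis. gg x k *\<^sub>R S k)"
proof -
  have "x = (\<Sum>k\<in>Basis. gg x (S k) *\<^sub>R k)" by (rule expand)
  also have "\<dots> = (\<Sum>k\<in>Basis. gg x (S (S k)) *\<^sub>R S k)" by (rule sum_S)
  finally show ?thesis by simp
qed

lemma nondeg: assumes "\<And>w. gg z w = 0" shows "z = 0"
  using assms[of "S z"] by (simp add: gg_SS)

lemma R1: "(\<Sum>m\<in>Basis. \<Sum>k\<in>Basis. f m k) = (\<Sum>m\<in>Basis. \<Sum>k\<in>Basis. f (S k) (S m))"
proof -
  have "(\<Sum>m\<in>Basis. \<Sum>k\<in>Basis. f m k) = (\<Sum>m\<in>Basis. \<Sum>k\<in>Basis. f (S m) (S k))"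
    by (subst sum_S, subst (2) sum_S) simp
  also have "\<dots> = (\<Sum>k\<in>Basis. \<Sum>m\<in>Basis. f (S m) (S k))" by (rule sum.swap)
  finally show ?thesis .
qed

lemma R3: "(\<Sum>m\<in>Basis. \<Sum>k\<in>Basis. f m k) = (\<Sum>m\<in>Basis. \<Sum>k\<in>Basis. f (S m) (S k))"
  by (subst sum_S, subst (2) sum_S) simp

lemma trace_eq: "lin_trace f = (\<Sum>m\<in>Basis. gg (f m) (S m))"
  by (simp add: lin_trace_def gg_SS)

definition KZ :: "'u \<Rightarrow> 'u \<Rightarrow> 'u \<Rightarrow> real" where
  "KZ u v w = gg (br u v) w + gg (br w u) v + gg (br w v) u"

definition LCx :: "'u \<Rightarrow> 'u \<Rightarrow> 'u" where
  "LCx u v = (\<Sum>k\<in>Basis. (KZ u v (S k) / 2) *\<^sub>R k)"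

lemma KZ_sum3: "KZ u v (\<Sum>k\<in>A. c k *\<^sub>R f k) = (\<Sum>k\<in>A. c k * KZ u v (f k))"
  unfolding KZ_def
  by (simp add: br_sum_left gg_sum_left gg_sum_right sum.distrib sum_distrib_left algebra_simps)

lemma KZ_sum2: "KZ u (\<Sum>k\<in>A. c k *\<^sub>R f k) w = (\<Sum>k\<in>A. c k * KZ u (f k) w)"
  unfolding KZ_def
  by (simp add: br_sum_right gg_sum_left gg_sum_right sum.distrib sum_distrib_left algebra_simps)

lemma KZ_lin3: "KZ u v w = (\<Sum>k\<in>Basis. inner (S w) k * KZ u v (S k))"
proof -
  have "S w = (\<Sum>k\<in>Basis. inner (S w) k *\<^sub>R k)" by (simp add: euclidean_representation)
  then have "S (S w) = S (\<Sum>k\<in>Basis. inner (S w) k *\<^sub>R k)" by simp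
  then have w: "w = (\<Sum>k\<in>Basis. inner (S w) k *\<^sub>R S k)" by (simp add: S_sum)
  have "KZ u v w = KZ u v (\<Sum>k\<in>Basis. inner (S w) k *\<^sub>R S k)" by (subst w) (rule refl)
  also have "\<dots> = (\<Sum>k\<in>Basis. inner (S w) k * KZ u v (S k))" by (rule KZ_sum3)
  finally show ?thesis .
qed

lemma gLC: "gg (LCx u v) w = KZ u v w / 2"
proof -
  have "gg (LCx u v) w = (\<Sum>k\<in>Basis. KZ u v (S k) / 2 * inner (S w) k)"
    unfolding LCx_def gg_sum_left by (simp add: gg_def inner_commute)
  also have "\<dots> = (\<Sum>k\<in>Basis. inner (S w) k * KZ u v (S k)) / 2"
    by (simp add: sum_divide_distrib algebra_simps)
  also have "\<dots> = KZ u v w / 2" by (simp add: KZ_lin3[symmetric])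
  finally show ?thesis .
qed

lemma LC_eq: "levi_civita br gg = LCx"
proof (intro ext)
  fix u v
  show "levi_civita br gg u v = LCx u v"
    unfolding levi_civita_def
  proof (rule the_equality)
    show "\<forall>w. 2 * gg (LCx u v) w = gg (br u v) w + gg (br w u) v + gg (br w v) u"
      by (simp add: gLC KZ_def)
  next
    fix z assume z: "\<forall>w. 2 * gg z w = gg (br u v) w + gg (br w u) v + gg (br w v) u"
    have "gg (z - LCx u v) w = 0" for w using z[rule_format, of w] by (simp add: gLC KZ_def)
    then have "z - LCx u v = 0" by (rule nondeg)
    then show "z = LCx u v" by simp
  qed
qed


lemma KZ_lin1: "linear (\<lambda>u. KZ u v w)"
  by (rule linearI) (simp_all add: KZ_def algebra_simps)
lemma KZ_lin2: "linear (\<lambda>v. KZ u v w)"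
  by (rule linearI) (simp_all add: KZ_def algebra_simps)
lemma LCx_lin1: "linear (\<lambda>u. LCx u v)"
  unfolding LCx_def
  by (rule linearI) (simp_all add: linear_add[OF KZ_lin1] linear_scale[OF KZ_lin1]
      sum.distrib scaleR_add_left add_divide_distrib scaleR_sum_right)
lemma LCx_lin2: "linear (\<lambda>v. LCx u v)"
  unfolding LCx_def
  by (rule linearI) (simp_all add: linear_add[OF KZ_lin2] linear_scale[OF KZ_lin2]
      sum.distrib scaleR_add_left add_divide_distrib scaleR_sum_right)
lemma LCx_bil: "bilinear LCx"
  unfolding bilinear_def using LCx_lin1 LCx_lin2 by simp

lemma LC_prop: "2 * gg (levi_civita br gg u v) w = gg (br u v) w + gg (br w u) v + gg (br w v) u"
  by (simp add: LC_eq gLC KZ_def)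

end

locale rsetup = rbase +
  assumes uni: "\<And>u. lin_trace (br u) = 0"
begin

lemma ric_expand: "ricci_form br gg u v =
   (\<Sum>m\<in>Basis. KZ (br u m) v (S m) / 2 - KZ u (LCx m v) (S m) / 2 + KZ m (LCx u v) (S m) / 2)"
  unfolding ricci_form_def curvature_def LC_eq Let_def trace_eq
  by (simp add: gLC algebra_simps)

lemma third0: "(\<Sum>m\<in>Basis. KZ m z (S m)) = 0"
proof -
  have t1: "(\<Sum>m\<in>Basis. gg (br m z) (S m)) = 0"
  proof -
    have "(\<Sum>m\<in>Basis. gg (br m z) (S m)) = - lin_trace (br z)"
      unfolding lin_trace_def by (simp add: gg_SS sum_negf[symmetric] anti[of _ z])
    then show ?thesis by (simp add: uni)
  qed
  have t2: "(\<Sum>m\<in>Basis. gg (br (S m) m) z) = 0"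
  proof -
    have "(\<Sum>m\<in>Basis. gg (br (S m) m) z) = (\<Sum>m\<in>Basis. gg (br (S (S m)) (S m)) z)"
      by (rule sum_S)
    also have "\<dots> = - (\<Sum>m\<in>Basis. gg (br (S m) m) z)"
      by (simp add: sum_negf[symmetric] anti[of m "S m" for m])
    finally show ?thesis by simp
  qed
  have t3: "(\<Sum>m\<in>Basis. gg (br (S m) z) m) = 0"
  proof -
    have "(\<Sum>m\<in>Basis. gg (br (S m) z) m) = (\<Sum>m\<in>Basis. gg (br (S (S m)) z) (S m))"
      by (rule sum_S)
    also have "\<dots> = (\<Sum>m\<in>Basis. gg (br m z) (S m))" by simp
    finally show ?thesis using t1 by simp
  qed
  show ?thesis unfolding KZ_def using t1 t2 t3 by (simp add: sum.distrib)
qed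

lemma second: "KZ u (LCx m v) w = (\<Sum>k\<in>Basis. KZ m v (S k) / 2 * KZ u k w)"
  unfolding LCx_def by (rule KZ_sum2)

lemma ric_expand2: "ricci_form br gg u v =
   (\<Sum>m\<in>Basis. KZ (br u m) v (S m)) / 2 - (\<Sum>m\<in>Basis. \<Sum>k\<in>Basis. KZ m v (S k) * KZ u k (S m)) / 4"
proof -
  have "ricci_form br gg u v = (\<Sum>m\<in>Basis. KZ (br u m) v (S m)) / 2
      - (\<Sum>m\<in>Basis. KZ u (LCx m v) (S m)) / 2 + (\<Sum>m\<in>Basis. KZ m (LCx u v) (S m)) / 2"
    unfolding ric_expand by (simp add: sum.distrib sum_subtractf sum_divide_distrib)
  also have "(\<Sum>m\<in>Basis. KZ m (LCx u v) (S m)) = 0" by (rule third0)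
  also have "(\<Sum>m\<in>Basis. KZ u (LCx m v) (S m)) = (\<Sum>m\<in>Basis. \<Sum>k\<in>Basis. KZ m v (S k) * KZ u k (S m)) / 2"
    by (simp add: second sum_divide_distrib)
  finally show ?thesis by simp
qed

definition Yt where "Yt u v = (\<Sum>m\<in>Basis. gg (br (S m) (br u m)) v)"
definition Tt where "Tt u v = (\<Sum>i\<in>Basis. \<Sum>j\<in>Basis. gg (br i j) u * gg (br (S i) (S j)) v)"
definition Smt where "Smt u v = (\<Sum>m\<in>Basis. gg (br u m) (br v (S m)))"

lemma br_expand_right: "br x y = (\<Sum>k\<in>Basis. gg y (S k) *\<^sub>R br x k)"
proof -
  have "br x y = br x (\<Sum>k\<in>Basis. gg y (S k) *\<^sub>R k)" by (subst expand[of y]) (rule refl)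
  also have "\<dots> = (\<Sum>k\<in>Basis. gg y (S k) *\<^sub>R br x k)" by (simp add: br_sum_right)
  finally show ?thesis .
qed

lemma nine: "(\<Sum>m\<in>Basis. \<Sum>k\<in>Basis. KZ m v (S k) * KZ u k (S m)) = 2 * Yt u v - Tt u v"
proof -
  let ?A1 = "\<lambda>m k. gg (br m v) (S k)"
  let ?A2 = "\<lambda>m k. gg (br (S k) m) v"
  let ?A3 = "\<lambda>m k. gg (br (S k) v) m"
  let ?B1 = "\<lambda>m k. gg (br u k) (S m)"
  let ?B2 = "\<lambda>m k. gg (br (S m) u) k"
  let ?B3 = "\<lambda>m k. gg (br (S m) k) u"
  let ?s = "\<lambda>f. (\<Sum>m\<in>Basis. \<Sum>k\<in>Basis. (f m k :: real))"
  have pw: "KZ m v (S k) * KZ u k (S m) = ?A1 m k * ?B1 m k + ?A1 m k * ?B2 m k + ?A1 m k * ?B3 m k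
     + ?A2 m k * ?B1 m k + ?A2 m k * ?B2 m k + ?A2 m k * ?B3 m k
     + ?A3 m k * ?B1 m k + ?A3 m k * ?B2 m k + ?A3 m k * ?B3 m k" for m k
    unfolding KZ_def by (simp add: algebra_simps)
  have split: "?s (\<lambda>m k. KZ m v (S k) * KZ u k (S m)) =
      ?s (\<lambda>m k. ?A1 m k * ?B1 m k) + ?s (\<lambda>m k. ?A1 m k * ?B2 m k) + ?s (\<lambda>m k. ?A1 m k * ?B3 m k)
     + ?s (\<lambda>m k. ?A2 m k * ?B1 m k) + ?s (\<lambda>m k. ?A2 m k * ?B2 m k) + ?s (\<lambda>m k. ?A2 m k * ?B3 m k)
     + ?s (\<lambda>m k. ?A3 m k * ?B1 m k) + ?s (\<lambda>m k. ?A3 m k * ?B2 m k) + ?s (\<lambda>m k. ?A3 m k * ?B3 m k)"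
    unfolding pw by (simp only: sum.distrib)
  have au: "\<And>k. br k u = - br u k" by (rule anti)
  have r32: "?s (\<lambda>m k. ?A3 m k * ?B2 m k) = - ?s (\<lambda>m k. ?A1 m k * ?B1 m k)"
  proof -
    have "?s (\<lambda>m k. ?A3 m k * ?B2 m k) = ?s (\<lambda>m k. ?A3 (S k) (S m) * ?B2 (S k) (S m))" by (rule R1)
    then show ?thesis by (simp add: au sum_negf)
  qed
  have r31: "?s (\<lambda>m k. ?A3 m k * ?B1 m k) = - ?s (\<lambda>m k. ?A1 m k * ?B2 m k)"
  proof -
    have "?s (\<lambda>m k. ?A3 m k * ?B1 m k) = ?s (\<lambda>m k. ?A3 (S k) (S m) * ?B1 (S k) (S m))" by (rule R1)
    then show ?thesis by (simp add: anti[of u] sum_negf gg_SS)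
  qed
  have r33: "?s (\<lambda>m k. ?A3 m k * ?B3 m k) = - ?s (\<lambda>m k. ?A1 m k * ?B3 m k)"
  proof -
    have "?s (\<lambda>m k. ?A3 m k * ?B3 m k) = ?s (\<lambda>m k. ?A3 (S k) (S m) * ?B3 (S k) (S m))" by (rule R1)
    also have "\<dots> = - ?s (\<lambda>m k. ?A1 m k * ?B3 m k)"
      by (simp add: sum_negf[symmetric], intro sum.cong refl, subst anti, simp)
    finally show ?thesis .
  qed
  have r22: "?s (\<lambda>m k. ?A2 m k * ?B2 m k) = ?s (\<lambda>m k. ?A2 m k * ?B1 m k)"
  proof -
    have "?s (\<lambda>m k. ?A2 m k * ?B2 m k) = ?s (\<lambda>m k. ?A2 (S k) (S m) * ?B2 (S k) (S m))" by (rule R1)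
    also have "\<dots> = ?s (\<lambda>m k. ?A2 m k * ?B1 m k)"
      by (intro sum.cong refl, simp add: au, subst anti, simp)
    finally show ?thesis .
  qed
  have r21: "?s (\<lambda>m k. ?A2 m k * ?B1 m k) = Yt u v"
  proof -
    have "Yt u v = ?s (\<lambda>m k. gg (br u m) (S k) * gg (br (S m) k) v)"
      unfolding Yt_def
      by (subst br_expand_right, simp add: gg_sum_left)
    also have "\<dots> = (\<Sum>k\<in>Basis. \<Sum>m\<in>Basis. gg (br u m) (S k) * gg (br (S m) k) v)"
      by (rule sum.swap)
    also have "\<dots> = ?s (\<lambda>m k. ?A2 m k * ?B1 m k)" by (simp add: mult.commute)
    finally show ?thesis by simp
  qed
  have r23: "?s (\<lambda>m k. ?A2 m k * ?B3 m k) = - Tt u v"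
  proof -
    have "Tt u v = (\<Sum>m\<in>Basis. \<Sum>k\<in>Basis. gg (br (S m) k) u * gg (br (S (S m)) (S k)) v)"
      unfolding Tt_def by (rule sum_S)
    also have "\<dots> = - ?s (\<lambda>m k. ?A2 m k * ?B3 m k)"
      by (simp add: sum_negf[symmetric], intro sum.cong refl, subst anti, simp)
    finally show ?thesis by simp
  qed
  show ?thesis using split r32 r31 r33 r22 r21 r23 by simp
qed

lemma ric_formula: "ricci_form br gg u v = - lin_trace (\<lambda>w. br v (br u w)) / 2 - Smt u v / 2 + Tt u v / 4"
proof -
  have a: "(\<Sum>m\<in>Basis. gg (br (br u m) v) (S m)) = - lin_trace (\<lambda>w. br v (br u w))"
    unfolding lin_trace_def
    by (simp add: gg_SS sum_negf[symmetric], intro sum.cong refl, subst anti, simp)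
  have b: "(\<Sum>m\<in>Basis. gg (br (S m) v) (br u m)) = - Smt u v"
    unfolding Smt_def
    by (simp add: sum_negf[symmetric], intro sum.cong refl, subst gg_sym, subst anti, simp)
  have c: "(\<Sum>m\<in>Basis. KZ (br u m) v (S m)) = - lin_trace (\<lambda>w. br v (br u w)) + Yt u v - Smt u v"
    unfolding KZ_def sum.distrib a b Yt_def by simp
  show ?thesis unfolding ric_expand2 c nine by (simp add: field_simps)
qed

end


locale symform =
  fixes g :: "'a::euclidean_space \<Rightarrow> 'a \<Rightarrow> real"
  assumes gbil: "bilinear g" and gsym: "\<And>x y. g x y = g y x"
begin
lemma g_add_l[simp]: "g (x + y) z = g x z + g y z" using gbil by (rule bilinear_ladd)
lemma g_add_r[simp]: "g z (x + y) = g z x + g z y" using gbil by (rule bilinear_radd)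
lemma g_diff_l[simp]: "g (x - y) z = g x z - g y z" using gbil by (rule bilinear_lsub)
lemma g_diff_r[simp]: "g z (x - y) = g z x - g z y" using gbil by (rule bilinear_rsub)
lemma g_scale_l[simp]: "g (c *\<^sub>R x) z = c * g x z" using bilinear_lmul[OF gbil] by simp
lemma g_scale_r[simp]: "g z (c *\<^sub>R x) = c * g z x" using bilinear_rmul[OF gbil] by simp
lemma g_neg_l[simp]: "g (- x) z = - g x z" using gbil by (rule bilinear_lneg)
lemma g_neg_r[simp]: "g z (- x) = - g z x" using gbil by (rule bilinear_rneg)
lemma g_zero_l[simp]: "g 0 z = 0" using gbil by (rule bilinear_lzero)
lemma g_zero_r[simp]: "g z 0 = 0" using gbil by (rule bilinear_rzero)
lemma g_sum_l: "g (sum f A) z = (\<Sum>a\<in>A. g (f a) z)"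
  using linear_sum[OF bil_lin1[OF gbil]] by simp
lemma g_sum_r: "g z (sum f A) = (\<Sum>a\<in>A. g z (f a))"
  using linear_sum[OF bil_lin2[OF gbil]] by simp

lemma g_span_zero: assumes "w \<in> span B" and "\<And>b. b \<in> B \<Longrightarrow> g y b = 0" shows "g y w = 0"
  using assms(1) by (induction rule: span_induct_alt) (auto simp: assms(2))

lemma gs_exists_aux:
  "\<forall>V. dim V = n \<longrightarrow> subspace V \<longrightarrow> (\<forall>x\<in>V. x \<noteq> 0 \<longrightarrow> g x x > 0) \<longrightarrow>
    (\<exists>B. B \<subseteq> V \<and> finite B \<and> card B = dim V \<and> (\<forall>x\<in>B. g x x = 1)
       \<and> (\<forall>x\<in>B. \<forall>y\<in>B. x \<noteq> y \<longrightarrow> g x y = 0) \<and> V \<subseteq> span B)"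
proof (induction n)
  case 0
  show ?case
  proof (intro allI impI)
    fix V :: "'a set" assume "dim V = 0" "subspace V"
    then have "V \<subseteq> {0}" by simp
    then show "\<exists>B. B \<subseteq> V \<and> finite B \<and> card B = dim V \<and> (\<forall>x\<in>B. g x x = 1)
       \<and> (\<forall>x\<in>B. \<forall>y\<in>B. x \<noteq> y \<longrightarrow> g x y = 0) \<and> V \<subseteq> span B"
      using \<open>dim V = 0\<close> by (intro exI[of _ "{}"]) (auto simp: span_empty)
  qed
next
  case (Suc n)
  show ?case
  proof (intro allI impI)
    fix V :: "'a set" assume dV: "dim V = Suc n" and sV: "subspace V" and pos: "\<forall>x\<in>V. x \<noteq> 0 \<longrightarrow> g x x > 0"
    obtain v where v: "v \<in> V" "v \<noteq> 0"
    proof -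
      have "\<not> V \<subseteq> {0}" using dV by (metis dim_eq_0 nat.distinct(1))
      then show ?thesis using that by auto
    qed
    have gv: "g v v > 0" using pos v by auto
    define w where "w = v /\<^sub>R sqrt (g v v)"
    have wV: "w \<in> V" using sV v by (simp add: w_def subspace_scale)
    have ss: "sqrt (g v v) * sqrt (g v v) = g v v" using gv by simp
    have gw: "g w w = 1" using gv ss by (simp add: w_def field_simps)
    define V' where "V' = {x\<in>V. g x w = 0}"
    have sV': "subspace V'"
      using sV unfolding V'_def subspace_def by auto
    have V'V: "V' \<subseteq> V" by (auto simp: V'_def)
    have eV': "span V' = V'" using sV' by (simp only: span_eq_iff)
    have wnV': "w \<notin> span V'" unfolding eV' using gw by (simp add: V'_def)
    have decomp: "x - g x w *\<^sub>R w \<in> V'" if "x \<in> V" for x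
      using that sV wV gw unfolding V'_def by (auto simp: subspace_diff subspace_scale)
    have Vsub: "V \<subseteq> span (insert w V')"
    proof
      fix x assume "x \<in> V"
      then have "x - g x w *\<^sub>R w \<in> span V'" using decomp span_base by blast
      then show "x \<in> span (insert w V')" by (auto simp: span_insert)
    qed
    have d1: "dim V \<le> dim (insert w V')" using Vsub by (rule dim_mono)
    have d2: "dim (insert w V') \<le> dim V" using wV V'V by (intro dim_subset) auto
    have dV': "dim V' = n" using d1 d2 dV wnV' by (simp add: dim_insert)
    have pos': "\<forall>x\<in>V'. x \<noteq> 0 \<longrightarrow> g x x > 0" using pos V'V by auto
    obtain B' where B': "B' \<subseteq> V'" "finite B'" "card B' = dim V'" "\<forall>x\<in>B'. g x x = 1"
      "\<forall>x\<in>B'. \<forall>y\<in>B'. x \<noteq> y \<longrightarrow> g x y = 0" "V' \<subseteq> span B'"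
      using Suc.IH dV' sV' pos' by blast
    have wB': "w \<notin> B'" using B'(1) wnV' span_base by blast
    show "\<exists>B. B \<subseteq> V \<and> finite B \<and> card B = dim V \<and> (\<forall>x\<in>B. g x x = 1)
       \<and> (\<forall>x\<in>B. \<forall>y\<in>B. x \<noteq> y \<longrightarrow> g x y = 0) \<and> V \<subseteq> span B"
    proof (intro exI[of _ "insert w B'"] conjI)
      show "insert w B' \<subseteq> V" using wV B'(1) V'V by auto
      show "finite (insert w B')" using B'(2) by simp
      show "card (insert w B') = dim V" using B'(2,3) wB' dV dV' by simp
      show "\<forall>x\<in>insert w B'. g x x = 1" using gw B'(4) by auto
      have "g x w = 0" if "x \<in> B'" for x using that B'(1) by (auto simp: V'_def)
      then show "\<forall>x\<in>insert w B'. \<forall>y\<in>insert w B'. x \<noteq> y \<longrightarrow> g x y = 0"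
        using B'(5) gsym by auto
      show "V \<subseteq> span (insert w B')"
      proof
        fix x assume "x \<in> V"
        then have "x - g x w *\<^sub>R w \<in> span B'" using decomp B'(6) by blast
        then have "x - g x w *\<^sub>R w \<in> span (insert w B')" using span_mono[of B' "insert w B'"] by blast
        moreover have "g x w *\<^sub>R w \<in> span (insert w B')" by (simp add: span_base span_scale)
        ultimately have "(x - g x w *\<^sub>R w) + g x w *\<^sub>R w \<in> span (insert w B')" by (rule span_add)
        then show "x \<in> span (insert w B')" by simp
      qed
    qed
  qed
qed

end

lemma frame_exists:
  fixes g :: "'v::euclidean_space \<Rightarrow> 'v \<Rightarrow> real" and e :: 'v
  assumes lf: "lorentzian_form g" and dims: "DIM('v) = DIM('w) + 2"
    and e0: "e \<noteq> 0" and ee: "g e e = 0"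
  obtains \<phi> :: "'v \<Rightarrow> real \<times> ('w::euclidean_space) \<times> real" and \<psi>
  where "linear \<phi>" "linear \<psi>" "\<And>x. \<psi> (\<phi> x) = x" "\<And>X. \<phi> (\<psi> X) = X"
    "\<And>x y. dext_form (\<phi> x) (\<phi> y) = g x y" "\<phi> e = (1, 0, 0)"
proof -
  have gb: "bilinear g" and gs: "\<And>x y. g x y = g y x" and nd: "nondegenerate_form g"
    and tt: "\<exists>t. g t t < 0 \<and> (\<forall>x. g x t = 0 \<and> x \<noteq> 0 \<longrightarrow> g x x > 0)"
    using lf unfolding lorentzian_form_def by auto
  interpret symform g using gb gs by unfold_locales auto
  obtain z where gz: "g e z \<noteq> 0" using nd e0 unfolding nondegenerate_form_def by blast
  define z1 where "z1 = z /\<^sub>R g e z"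
  have gez1: "g e z1 = 1" using gz by (simp add: z1_def)
  define eb where "eb = z1 - (g z1 z1 / 2) *\<^sub>R e"
  have geb: "g e eb = 1" using gez1 ee by (simp add: eb_def)
  have gbe: "g eb e = 1" using geb gs by metis
  have gbb: "g eb eb = 0" using gez1 ee gs[of z1 e] by (simp add: eb_def algebra_simps)
  define V where "V = {x. g x e = 0 \<and> g x eb = 0}"
  have sV: "subspace V" unfolding subspace_def V_def by auto
  have pos: "g x x > 0" if xV: "x \<in> V" and x0: "x \<noteq> 0" for x
  proof (rule ccontr)
    assume neg: "\<not> g x x > 0"
    obtain t where t: "g t t < 0" "\<And>y. g y t = 0 \<Longrightarrow> y \<noteq> 0 \<Longrightarrow> g y y > 0" using tt by blast
    define p where "p = e - eb"
    have gpp: "g p p = -2" using ee gbb geb gbe by (simp add: p_def)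
    have gxp: "g x p = 0" using xV by (simp add: V_def p_def)
    have gpe: "g p e = -1" using ee gbe by (simp add: p_def)
    define \<alpha> where "\<alpha> = g p t"
    define \<beta> where "\<beta> = g x t"
    show False
    proof (cases "\<alpha> = 0")
      case True
      have "p \<noteq> 0" using gpp by auto
      then have "g p p > 0" using t(2)[of p] True by (simp add: \<alpha>_def)
      then show False using gpp by simp
    next
      case False
      define w where "w = \<alpha> *\<^sub>R x - \<beta> *\<^sub>R p"
      have gwt: "g w t = 0" by (simp add: w_def \<alpha>_def \<beta>_def)
      have gwe: "g w e = \<beta>" using xV gpe by (simp add: w_def V_def)
      have "w \<noteq> 0"
      proof
        assume "w = 0"
        then have "\<beta> = 0" using gwe by simp
        then have "\<alpha> *\<^sub>R x = 0" using \<open>w = 0\<close> by (simp add: w_def)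
        then show False using False x0 by simp
      qed
      then have "g w w > 0" using t(2) gwt by blast
      moreover have "g w w = (\<alpha> * \<alpha>) * g x x - 2 * (\<beta> * \<beta>)"
        using gxp gpp gs[of p x] by (simp add: w_def algebra_simps)
      moreover have "(\<alpha> * \<alpha>) * g x x \<le> 0"
        using neg by (simp add: mult_nonneg_nonpos)
      moreover have "\<beta> * \<beta> \<ge> 0" by simp
      ultimately show False by argo
    qed
  qed
  have eV: "span V = V" using sV by (simp only: span_eq_iff)
  have ebnV: "eb \<notin> span V" unfolding eV using gbe by (simp add: V_def)
  have enV: "e \<notin> span (insert eb V)"
  proof
    assume "e \<in> span (insert eb V)"
    then obtain k where "e - k *\<^sub>R eb \<in> V" unfolding span_insert eV by blast
    then show False using geb gbb by (simp add: V_def)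
  qed
  have dimi: "dim (insert e (insert eb V)) = dim V + 2"
    using ebnV enV by (simp add: dim_insert)
  have univ: "UNIV \<subseteq> span (insert e (insert eb V))"
  proof
    fix x :: 'v
    have "(x - g x eb *\<^sub>R e) - g x e *\<^sub>R eb \<in> V"
      using ee geb gbe gbb by (simp add: V_def)
    then have "x - g x eb *\<^sub>R e \<in> span (insert eb V)" unfolding span_insert eV by blast
    then show "x \<in> span (insert e (insert eb V))" unfolding span_insert[of e] by blast
  qed
  have dV: "dim V = DIM('w)"
  proof -
    have "dim (UNIV :: 'v set) \<le> dim (insert e (insert eb V))" using univ by (rule dim_mono)
    moreover have "dim (insert e (insert eb V)) \<le> DIM('v)" by (rule dim_subset_UNIV)
    ultimately show ?thesis using dimi dims by simp
  qed
  have posb: "\<forall>x\<in>V. x \<noteq> 0 \<longrightarrow> g x x > 0" using pos by blast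
  obtain B where B: "B \<subseteq> V" "finite B" "card B = dim V" "\<forall>x\<in>B. g x x = 1"
    "\<forall>x\<in>B. \<forall>y\<in>B. x \<noteq> y \<longrightarrow> g x y = 0" "V \<subseteq> span B"
    using gs_exists_aux[of "dim V", THEN spec[of _ V], THEN mp, OF refl, THEN mp, OF sV, THEN mp, OF posb]
    by (elim exE conjE) (rule that)
  have cB: "card (Basis :: 'w set) = card B" using B(3) dV by simp
  obtain fb where fb: "bij_betw fb (Basis :: 'w set) B"
    using finite_same_card_bij[OF finite_Basis B(2) cB] by (elim exE)
  have fbB: "fb b \<in> B" if "b \<in> Basis" for b using bij_betw_apply[OF fb that] .
  have fbinj: "inj_on fb Basis" using fb by (rule bij_betw_imp_inj_on)
  have fbV: "fb b \<in> V" if "b \<in> Basis" for b using fbB[OF that] B(1) by blast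
  have fbo: "g (fb b) (fb b') = (if b = b' then 1 else 0)" if "b \<in> Basis" "b' \<in> Basis" for b b'
  proof (cases "b = b'")
    case True then show ?thesis using B(4) fbB[OF that(1)] by simp
  next
    case False
    then have "fb b \<noteq> fb b'" using fbinj that by (meson inj_onD)
    then show ?thesis using B(5) fbB[OF that(1)] fbB[OF that(2)] False by simp
  qed
  have fbe1: "g (fb b) e = 0" "g (fb b) eb = 0" if "b \<in> Basis" for b
    using fbV[OF that] unfolding V_def by simp_all
  have fbe: "g (fb b) e = 0" "g (fb b) eb = 0" "g e (fb b) = 0" "g eb (fb b) = 0" if "b \<in> Basis" for b
    using fbe1[OF that] gs[of e "fb b"] gs[of eb "fb b"] by simp_all
  define \<psi>0 where "\<psi>0 u = (\<Sum>b\<in>Basis. inner u b *\<^sub>R fb b)" for u :: 'w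
  define \<psi> where "\<psi> X = fst X *\<^sub>R e + \<psi>0 (fst (snd X)) + snd (snd X) *\<^sub>R eb" for X :: "real \<times> 'w \<times> real"
  define \<phi> where "\<phi> x = (g x eb, (\<Sum>b\<in>Basis. g x (fb b) *\<^sub>R b), g x e)" for x
  have p0e: "g (\<psi>0 u) e = 0" "g (\<psi>0 u) eb = 0" "g e (\<psi>0 u) = 0" "g eb (\<psi>0 u) = 0" for u
  proof -
    have "g (\<psi>0 u) e = (\<Sum>b\<in>Basis. inner u b * g (fb b) e)" by (simp add: \<psi>0_def g_sum_l)
    also have "\<dots> = 0" by (intro sum.neutral) (simp add: fbe)
    finally show "g (\<psi>0 u) e = 0" .
    have "g (\<psi>0 u) eb = (\<Sum>b\<in>Basis. inner u b * g (fb b) eb)" by (simp add: \<psi>0_def g_sum_l)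
    also have "\<dots> = 0" by (intro sum.neutral) (simp add: fbe)
    finally show "g (\<psi>0 u) eb = 0" .
    have "g e (\<psi>0 u) = (\<Sum>b\<in>Basis. inner u b * g e (fb b))" by (simp add: \<psi>0_def g_sum_r)
    also have "\<dots> = 0" by (intro sum.neutral) (simp add: fbe)
    finally show "g e (\<psi>0 u) = 0" .
    have "g eb (\<psi>0 u) = (\<Sum>b\<in>Basis. inner u b * g eb (fb b))" by (simp add: \<psi>0_def g_sum_r)
    also have "\<dots> = 0" by (intro sum.neutral) (simp add: fbe)
    finally show "g eb (\<psi>0 u) = 0" .
  qed
  have p0b: "g (\<psi>0 u) (fb b) = inner u b" if "b \<in> Basis" for u b
  proof -
    have "g (\<psi>0 u) (fb b) = (\<Sum>b'\<in>Basis. inner u b' * (if b' = b then 1 else 0))"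
      unfolding \<psi>0_def g_sum_l using that by (intro sum.cong refl) (simp add: fbo)
    also have "\<dots> = inner u b" using that by (simp add: if_distrib sum.delta' cong: if_cong)
    finally show ?thesis .
  qed
  have p0p0: "g (\<psi>0 u) (\<psi>0 v) = inner u v" for u v
  proof -
    have "g (\<psi>0 u) (\<psi>0 v) = (\<Sum>b\<in>Basis. inner v b * inner u b)"
      unfolding \<psi>0_def[of v] g_sum_r by (intro sum.cong refl) (simp add: p0b)
    also have "\<dots> = inner u v" by (simp add: euclidean_inner[of u v] mult.commute)
    finally show ?thesis .
  qed
  have psipsi: "g (\<psi> X) (\<psi> Y) = dext_form X Y" for X Y
  proof -
    obtain a1 u1 c1 where X: "X = (a1, u1, c1)" by (cases X) auto
    obtain a2 u2 c2 where Y: "Y = (a2, u2, c2)" by (cases Y) auto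
    have "g (\<psi> X) (\<psi> Y) = a1 * c2 + c1 * a2 + inner u1 u2"
      unfolding X Y \<psi>_def fst_conv snd_conv
      by (simp only: g_add_l g_add_r g_scale_l g_scale_r p0e p0p0 ee geb gbe gbb) simp
    then show ?thesis by (simp add: X Y dext_form_def)
  qed
  have sumb: "(\<Sum>b'\<in>Basis. c b' * inner b' b) = c b" if "b \<in> Basis" for c :: "'w \<Rightarrow> real" and b
  proof -
    have "(\<Sum>b'\<in>Basis. c b' * inner b' b) = (\<Sum>b'\<in>Basis. if b' = b then c b' else 0)"
      using that by (intro sum.cong refl) (auto simp: inner_Basis)
    then show ?thesis using that by (simp add: sum.delta')
  qed
  have phipsi: "\<phi> (\<psi> X) = X" for X
  proof -
    obtain a u c where X: "X = (a, u, c)" by (cases X) auto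
    have m: "(\<Sum>b\<in>Basis. g (\<psi> X) (fb b) *\<^sub>R b) = u"
    proof -
      have "(\<Sum>b\<in>Basis. g (\<psi> X) (fb b) *\<^sub>R b) = (\<Sum>b\<in>Basis. inner u b *\<^sub>R b)"
        by (intro sum.cong refl) (simp add: X \<psi>_def fbe p0b)
      then show ?thesis by (simp add: euclidean_representation)
    qed
    show ?thesis using ee geb gbe gbb m by (simp add: \<phi>_def X \<psi>_def p0e)
  qed
  have psiphi: "\<psi> (\<phi> x) = x" for x
  proof -
    define y where "y = x - \<psi> (\<phi> x)"
    have ye: "g y e = 0" using ee gbe by (simp add: y_def \<psi>_def \<phi>_def p0e)
    have yeb: "g y eb = 0" using geb gbb by (simp add: y_def \<psi>_def \<phi>_def p0e)
    have yb: "g y (fb b) = 0" if "b \<in> Basis" for b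
    proof -
      have "g (\<psi> (\<phi> x)) (fb b) = inner (\<Sum>b'\<in>Basis. g x (fb b') *\<^sub>R b') b"
        using that by (simp add: \<psi>_def \<phi>_def fbe p0b)
      also have "\<dots> = g x (fb b)" using that by (simp add: inner_sum_left sumb)
      finally show ?thesis by (simp add: y_def)
    qed
    have yV: "y \<in> V" using ye yeb by (simp add: V_def)
    have "g y y = 0"
    proof (rule g_span_zero)
      show "y \<in> span B" using yV B(6) by blast
      show "g y b = 0" if "b \<in> B" for b
        using that fb yb by (auto simp: bij_betw_def)
    qed
    then have "y = 0" using pos[OF yV] by (cases "y = 0") auto
    then show ?thesis by (simp add: y_def)
  qed
  have lphi: "linear \<phi>"
    by (rule linearI) (simp_all add: \<phi>_def scaleR_add_left sum.distrib scaleR_sum_right algebra_simps)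
  have lpsi0: "linear \<psi>0"
    by (rule linearI) (simp_all add: \<psi>0_def inner_add_left scaleR_add_left sum.distrib scaleR_sum_right)
  have lpsi: "linear \<psi>"
    by (rule linearI) (auto simp: \<psi>_def linear_add[OF lpsi0] linear_scale[OF lpsi0] algebra_simps)
  have iso: "dext_form (\<phi> x) (\<phi> y) = g x y" for x y
    using psipsi[of "\<phi> x" "\<phi> y"] by (simp add: psiphi)
  have phie: "\<phi> e = (1, 0, 0)" using geb ee by (simp add: \<phi>_def fbe)
  show ?thesis using that[OF lphi lpsi psiphi phipsi iso phie] .
qed



lemma ric_transfer:
  fixes \<phi> :: "'v::euclidean_space \<Rightarrow> 'c::euclidean_space"
  assumes iso: "isometric_lie_iso br g br2 g2 \<phi>"
    and gb: "bilinear g" and nd: "nondegenerate_form g"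
    and L2: "\<And>U V W. 2 * g2 (levi_civita br2 g2 U V) W = g2 (br2 U V) W + g2 (br2 W U) V + g2 (br2 W V) U"
    and L2b: "bilinear (levi_civita br2 g2)"
    and b2: "bilinear br2"
  shows "ricci_form br g u v = ricci_form br2 g2 (\<phi> u) (\<phi> v)"
proof -
  have lp: "linear \<phi>" and bj: "bij \<phi>" and hom: "\<And>x y. \<phi> (br x y) = br2 (\<phi> x) (\<phi> y)"
    and isom: "\<And>x y. g2 (\<phi> x) (\<phi> y) = g x y"
    using iso unfolding isometric_lie_iso_def by auto
  define \<psi> where "\<psi> = inv \<phi>"
  have pp: "\<phi> (\<psi> y) = y" for y using bj by (simp add: \<psi>_def bij_is_surj surj_f_inv_f)
  have qq: "\<psi> (\<phi> x) = x" for x using bj by (simp add: \<psi>_def bij_is_inj inv_f_f)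
  have lq: "linear \<psi>"
  proof (rule linearI)
    fix a b
    have "\<psi> (a + b) = \<psi> (\<phi> (\<psi> a + \<psi> b))" by (simp add: linear_add[OF lp] pp)
    then show "\<psi> (a + b) = \<psi> a + \<psi> b" by (simp add: qq)
  next
    fix c :: real and a
    have "\<psi> (c *\<^sub>R a) = \<psi> (\<phi> (c *\<^sub>R \<psi> a))" by (simp add: linear_scale[OF lp] pp)
    then show "\<psi> (c *\<^sub>R a) = c *\<^sub>R \<psi> a" by (simp add: qq)
  qed
  let ?L = "levi_civita br g" and ?L2 = "levi_civita br2 g2"
  have LL: "?L x y = \<psi> (?L2 (\<phi> x) (\<phi> y))" for x y
    unfolding levi_civita_def[of br g]
  proof (rule the_equality)
    show "\<forall>w. 2 * g (\<psi> (?L2 (\<phi> x) (\<phi> y))) w = g (br x y) w + g (br w x) y + g (br w y) x"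
    proof
      fix w
      have "2 * g (\<psi> (?L2 (\<phi> x) (\<phi> y))) w = 2 * g2 (?L2 (\<phi> x) (\<phi> y)) (\<phi> w)"
        using isom[of "\<psi> (?L2 (\<phi> x) (\<phi> y))" w] by (simp add: pp)
      also have "\<dots> = g2 (br2 (\<phi> x) (\<phi> y)) (\<phi> w) + g2 (br2 (\<phi> w) (\<phi> x)) (\<phi> y) + g2 (br2 (\<phi> w) (\<phi> y)) (\<phi> x)"
        by (rule L2)
      also have "\<dots> = g (br x y) w + g (br w x) y + g (br w y) x"
        by (simp add: hom[symmetric] isom)
      finally show "2 * g (\<psi> (?L2 (\<phi> x) (\<phi> y))) w = g (br x y) w + g (br w x) y + g (br w y) x" .
    qed
  next
    fix z assume z: "\<forall>w. 2 * g z w = g (br x y) w + g (br w x) y + g (br w y) x"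
    have h: "2 * g (\<psi> (?L2 (\<phi> x) (\<phi> y))) w = g (br x y) w + g (br w x) y + g (br w y) x" for w
    proof -
      have "2 * g (\<psi> (?L2 (\<phi> x) (\<phi> y))) w = 2 * g2 (?L2 (\<phi> x) (\<phi> y)) (\<phi> w)"
        using isom[of "\<psi> (?L2 (\<phi> x) (\<phi> y))" w] by (simp add: pp)
      also have "\<dots> = g (br x y) w + g (br w x) y + g (br w y) x"
        by (simp add: L2 hom[symmetric] isom)
      finally show ?thesis .
    qed
    have "g (z - \<psi> (?L2 (\<phi> x) (\<phi> y))) w = 0" for w
    proof -
      have "2 * g z w = 2 * g (\<psi> (?L2 (\<phi> x) (\<phi> y))) w" using z h[of w] by simp
      then show ?thesis by (simp add: bilinear_lsub[OF gb])
    qed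
    then have "z - \<psi> (?L2 (\<phi> x) (\<phi> y)) = 0" using nd unfolding nondegenerate_form_def by blast
    then show "z = \<psi> (?L2 (\<phi> x) (\<phi> y))" by simp
  qed
  define F where "F W = curvature br2 g2 (\<phi> u) W (\<phi> v)" for W
  have curv: "curvature br g u w v = \<psi> (F (\<phi> w))" for w
    unfolding curvature_def Let_def F_def LL hom pp
    by (simp add: linear_diff[OF lq])
  have lF: "linear F"
  proof -
    have l1: "linear (\<lambda>W. br2 (\<phi> u) W)" using b2 by (rule bil_lin2)
    have l2: "linear (\<lambda>W. ?L2 W (\<phi> v))" using L2b by (rule bil_lin1)
    have l3: "linear (\<lambda>W. ?L2 (\<phi> u) W)" using L2b by (rule bil_lin2)
    have l4: "linear (\<lambda>W. ?L2 W (?L2 (\<phi> u) (\<phi> v)))" using L2b by (rule bil_lin1)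
    have a: "linear (\<lambda>W. ?L2 (br2 (\<phi> u) W) (\<phi> v))"
      using linear_compose[OF l1 l2] by (simp add: o_def)
    have b: "linear (\<lambda>W. ?L2 (\<phi> u) (?L2 W (\<phi> v)))"
      using linear_compose[OF l2 l3] by (simp add: o_def)
    show ?thesis unfolding F_def curvature_def Let_def
      by (intro linear_compose_sub a b l4)
  qed
  have "ricci_form br g u v = lin_trace (\<lambda>w. \<psi> (F (\<phi> w)))"
    unfolding ricci_form_def curv ..
  also have "\<dots> = lin_trace F" using trace_transfer[OF lp lq pp lF] by simp
  finally show ?thesis unfolding ricci_form_def F_def .
qed



definition swp :: "real \<times> 'w::euclidean_space \<times> real \<Rightarrow> real \<times> 'w \<times> real" where
  "swp X = (snd (snd X), fst (snd X), fst X)"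

abbreviation (input) EE :: "real \<times> 'w::euclidean_space \<times> real" where "EE \<equiv> (1, 0, 0)"
abbreviation (input) EB :: "real \<times> 'w::euclidean_space \<times> real" where "EB \<equiv> (0, 0, 1)"
definition FF :: "'w::euclidean_space \<Rightarrow> real \<times> 'w \<times> real" where "FF u = (0, u, 0)"

lemma Basis3: "(Basis :: (real \<times> 'w::euclidean_space \<times> real) set) = insert EE (insert EB (FF ` Basis))"
  by (auto simp: Basis_prod_def FF_def zero_prod_def)

lemma sum3: "(\<Sum>k\<in>(Basis :: (real \<times> 'w::euclidean_space \<times> real) set). f k)
    = f EE + f EB + (\<Sum>b\<in>Basis. f (FF b))"
proof -
  have inj: "inj_on (FF :: 'w \<Rightarrow> _) Basis" by (auto simp: inj_on_def FF_def)
  have n1: "(EE :: real \<times> 'w \<times> real) \<notin> insert EB (FF ` Basis)" by (auto simp: FF_def)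
  have n2: "(EB :: real \<times> 'w \<times> real) \<notin> FF ` Basis" by (auto simp: FF_def)
  show ?thesis unfolding Basis3 using n1 n2
    by (simp add: sum.reindex[OF inj] add.assoc)
qed

lemma swp_rbase:
  fixes br :: "real \<times> 'w::euclidean_space \<times> real \<Rightarrow> real \<times> 'w \<times> real \<Rightarrow> real \<times> 'w \<times> real"
  assumes "bilinear br" "\<And>x y. br x y = - br y x"
  shows "rbase br swp"
proof (rule rbase.intro)
  show "bilinear br" by (rule assms(1))
  show "br x y = - br y x" for x y by (rule assms(2))
  show "linear (swp :: real \<times> 'w \<times> real \<Rightarrow> real \<times> 'w \<times> real)"
    by (rule linearI) (simp_all add: swp_def)
  show "swp (swp x) = x" for x :: "real \<times> 'w \<times> real" by (simp add: swp_def)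
  show "inner (swp x) y = inner x (swp y)" for x y :: "real \<times> 'w \<times> real"
  proof -
    obtain a1 u1 c1 where x: "x = (a1, u1, c1)" by (cases x) auto
    obtain a2 u2 c2 where y: "y = (a2, u2, c2)" by (cases y) auto
    show ?thesis unfolding x y swp_def by (simp add: mult.commute add.commute)
  qed
  show "swp b \<in> Basis" if "b \<in> (Basis :: (real \<times> 'w \<times> real) set)" for b
  proof -
    have "b = EE \<or> b = EB \<or> b \<in> FF ` Basis" using that unfolding Basis3 by blast
    then show ?thesis unfolding Basis3 by (auto simp: swp_def FF_def)
  qed
qed

lemma at_bt2_nonneg:
  fixes a b :: real
  assumes h: "\<And>t. a * t + b * t * t \<ge> 0"
  shows "a = 0"
proof (rule ccontr)
  assume a: "a \<noteq> 0"
  define B where "B = \<bar>b\<bar> + 1"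
  have B: "B > 0" by (simp add: B_def add_nonneg_pos)
  define t where "t = - a / (2 * B)"
  have tt: "t * t \<ge> 0" by simp
  have bB: "b \<le> B" by (simp add: B_def)
  have 1: "b * t * t \<le> B * t * t" using mult_right_mono[OF bB tt] by (simp add: mult.assoc)
  have 2: "a * t + B * t * t = - (a * a) / (4 * B)" using B by (simp add: t_def field_simps)
  have aa: "a * a > 0" using a not_real_square_gt_zero by blast
  have 3: "- (a * a) / (4 * B) < 0" using aa B by (simp add: divide_pos_pos)
  show False using h[of t] 1 2 3 by linarith
qed


lemma FF_lin: "linear FF" by (rule linearI) (simp_all add: FF_def)
lemma FF_expand: "FF u = (\<Sum>b\<in>Basis. inner u b *\<^sub>R FF b)"
proof -
  have "FF u = FF (\<Sum>b\<in>Basis. inner u b *\<^sub>R b)" by (simp add: euclidean_representation)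
  also have "\<dots> = (\<Sum>b\<in>Basis. inner u b *\<^sub>R FF b)" by (rule lin_sum_scale[OF FF_lin])
  finally show ?thesis .
qed
definition midl :: "real \<times> 'w::euclidean_space \<times> real \<Rightarrow> 'w" where "midl Z = fst (snd Z)"
lemma midl_lin: "linear midl" by (rule linearI) (simp_all add: midl_def)


lemma FF_zero:
  assumes "linear h" "\<And>b. b \<in> Basis \<Longrightarrow> h (FF b) = 0"
  shows "h (FF u) = 0"
proof -
  have "h (FF u) = (\<Sum>b\<in>Basis. inner u b *\<^sub>R h (FF b))"
    by (subst FF_expand) (rule lin_sum_scale[OF assms(1)])
  also have "\<dots> = 0" by (intro sum.neutral) (simp add: assms(2))
  finally show ?thesis .
qed

lemma lin_repr:
  fixes l :: "'w::euclidean_space \<Rightarrow> real"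
  assumes "linear l" shows "inner (\<Sum>b\<in>Basis. l b *\<^sub>R b) u = l u"
proof -
  have "inner (\<Sum>b\<in>Basis. l b *\<^sub>R b) u = (\<Sum>b\<in>Basis. l b * inner b u)"
    by (simp add: inner_sum_left)
  also have "\<dots> = (\<Sum>b\<in>Basis. inner u b * l b)"
    by (metis (no_types, lifting) inner_commute mult.commute)
  also have "\<dots> = l (\<Sum>b\<in>Basis. inner u b *\<^sub>R b)" by (simp add: lin_sum_scale[OF assms])
  also have "\<dots> = l u" by (simp add: euclidean_representation)
  finally show ?thesis .
qed

lemma decomp3: "X = fst X *\<^sub>R EE + FF (fst (snd X)) + snd (snd X) *\<^sub>R EB"
  by (cases X) (simp add: FF_def)

locale conc =
  fixes br :: "real \<times> 'w::euclidean_space \<times> real \<Rightarrow> real \<times> 'w \<times> real \<Rightarrow> real \<times> 'w \<times> real"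
  assumes cbil: "bilinear br" and canti: "\<And>x y. br x y = - br y x"
    and cuni: "\<And>u. lin_trace (br u) = 0"
    and third: "\<And>X Y. snd (snd (br X Y)) = 0"
    and qpos: "\<And>X. lin_trace (\<lambda>W. br X (br X W)) \<ge> 0"
begin

sublocale rsetup br swp
  using swp_rbase[OF cbil canti] cuni by (simp add: rsetup_def rsetup_axioms_def)

lemma gg_eq: "gg = dext_form"
proof (intro ext)
  fix x y :: "real \<times> 'w \<times> real"
  obtain a1 u1 c1 where x: "x = (a1, u1, c1)" by (cases x) auto
  obtain a2 u2 c2 where y: "y = (a2, u2, c2)" by (cases y) auto
  show "gg x y = dext_form x y" unfolding x y gg_def swp_def dext_form_def by (simp add: add.commute)
qed

lemma swpE[simp]: "swp EE = EB" "swp EB = EE" "swp (FF b) = FF b" by (simp_all add: swp_def FF_def)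

lemma gg_E: "gg Z EE = snd (snd Z)" by (simp add: gg_eq dext_form_def case_prod_unfold)
lemma gg_F: "gg Z (FF b) = inner (fst (snd Z)) b" by (simp add: gg_eq dext_form_def FF_def case_prod_unfold)
lemma gg_E1: "gg (a, 0, 0) Z = a * snd (snd Z)" by (simp add: gg_eq dext_form_def case_prod_unfold)
lemma gg_self: "snd (snd Z) = 0 \<Longrightarrow> gg Z Z = inner (fst (snd Z)) (fst (snd Z))"
  by (simp add: gg_eq dext_form_def case_prod_unfold)
lemma gg_brE: "gg (br X Y) EE = 0" by (simp add: gg_E third)

lemma lin_br1: "linear (br X)" using bil_lin2[OF cbil] by (simp add: eta_contract_eq)

definition Qf where "Qf X Y = lin_trace (\<lambda>W. br X (br Y W))"

lemma Qf_comm: "Qf X Y = Qf Y X"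
  unfolding Qf_def by (rule trace_comm[OF lin_br1 lin_br1])

lemma Qf_expand: "Qf (X + t *\<^sub>R Y) (X + t *\<^sub>R Y) = Qf X X + t * (Qf X Y + Qf Y X) + t * t * Qf Y Y"
proof -
  have "(\<lambda>W. br (X + t *\<^sub>R Y) (br (X + t *\<^sub>R Y) W)) =
     (\<lambda>W. br X (br X W) + (t *\<^sub>R br X (br Y W) + t *\<^sub>R br Y (br X W)) + (t * t) *\<^sub>R br Y (br Y W))"
    by (intro ext) (simp add: algebra_simps)
  then show ?thesis unfolding Qf_def by (simp add: lin_trace_add lin_trace_scale algebra_simps)
qed

lemma Qf_zero:
  assumes "Qf X X = 0" shows "Qf X Y = 0"
proof -
  have "t * (2 * Qf X Y) + Qf Y Y * t * t \<ge> 0" for t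
  proof -
    have q: "0 \<le> Qf (X + t *\<^sub>R Y) (X + t *\<^sub>R Y)" unfolding Qf_def by (rule qpos)
    then have "0 \<le> Qf X X + t * (Qf X Y + Qf Y X) + t * t * Qf Y Y" by (simp only: Qf_expand)
    then show ?thesis using assms Qf_comm[of Y X] by (simp add: algebra_simps)
  qed
  then have "2 * Qf X Y = 0" using at_bt2_nonneg[of "2 * Qf X Y" "Qf Y Y"] by (simp add: mult.commute)
  then show ?thesis by simp
qed

lemma ric_Qf: "ricci_form br dext_form u v = - Qf v u / 2 - Smt u v / 2 + Tt u v / 4"
  using ric_formula by (simp add: gg_eq Qf_def)

lemma br_self[simp]: "br x x = 0"
proof -
  have "br x x + br x x = 0" using canti[of x x] by (simp add: eq_neg_iff_add_eq_0)
  then have "2 *\<^sub>R br x x = 0" by (simp add: scaleR_2)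
  then show ?thesis by simp
qed

lemma Tt_E: "Tt EE v = 0" unfolding Tt_def by (simp add: gg_brE)

lemma Smt_EE: "Smt EE EE = (\<Sum>b\<in>Basis. inner (fst (snd (br EE (FF b)))) (fst (snd (br EE (FF b)))))"
  unfolding Smt_def sum3 by (simp add: gg_self third)
end

locale conc_ein = conc +
  fixes c :: real
  assumes ein: "\<And>X Y. ricci_form br dext_form X Y = c * dext_form X Y"
begin

lemma step1: "Qf EE EE = 0" and step1b: "\<And>b. b \<in> Basis \<Longrightarrow> fst (snd (br EE (FF b))) = 0"
proof -
  have "ricci_form br dext_form EE EE = 0" using ein by (simp add: dext_form_def)
  then have h: "Qf EE EE + Smt EE EE = 0" unfolding ric_Qf Tt_E by simp
  have s0: "Smt EE EE \<ge> 0" unfolding Smt_EE by (intro sum_nonneg) simp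
  have q0: "Qf EE EE \<ge> 0" unfolding Qf_def by (rule qpos)
  show "Qf EE EE = 0" using h s0 q0 by simp
  have "Smt EE EE = 0" using h s0 q0 by simp
  then have "\<forall>b\<in>Basis. inner (fst (snd (br EE (FF b)))) (fst (snd (br EE (FF b)))) = 0"
    unfolding Smt_EE by (subst (asm) sum_nonneg_eq_0_iff) auto
  then show "\<And>b. b \<in> Basis \<Longrightarrow> fst (snd (br EE (FF b))) = 0" by simp
qed

lemma QfE: "Qf EE Y = 0" "Qf Y EE = 0"
  using Qf_zero[OF step1] Qf_comm by auto

definition w0 where "w0 = fst (snd (br EE EB))"

lemma brEF: "b \<in> Basis \<Longrightarrow> br EE (FF b) = (fst (br EE (FF b)), 0, 0)"
  using step1b[of b] third[of EE "FF b"] by (cases "br EE (FF b)") auto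

lemma step3: "c = inner w0 w0 / 2"
proof -
  have "ricci_form br dext_form EE EB = c" using ein by (simp add: dext_form_def)
  moreover have "Smt EE EB = - inner w0 w0"
  proof -
    have a: "gg (br EE EB) (br EB EE) = - inner w0 w0"
      using gg_self[OF third[of EE EB]] canti[of EB EE] by (simp add: w0_def)
    have b: "gg (br EE (FF b)) (br EB (FF b)) = 0" if bB: "b \<in> Basis" for b
    proof -
      obtain a where "br EE (FF b) = (a, 0, 0)" using brEF[OF bB] by metis
      then show ?thesis by (simp add: gg_E1 third)
    qed
    show ?thesis unfolding Smt_def sum3 using a b by simp
  qed
  ultimately show ?thesis unfolding ric_Qf Tt_E QfE by simp
qed


lemma brE_lin: "linear (\<lambda>u. br EE (FF u))"
  using linear_compose[OF FF_lin lin_br1] by (simp add: o_def)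

lemma midEF_all: "fst (snd (br EE (FF u))) = 0"
proof -
  have "br EE (FF u) = (\<Sum>b\<in>Basis. inner u b *\<^sub>R br EE (FF b))"
    by (subst FF_expand) (simp add: br_sum_right)
  then have "midl (br EE (FF u)) = (\<Sum>b\<in>Basis. inner u b *\<^sub>R midl (br EE (FF b)))"
    by (simp add: lin_sum_scale[OF midl_lin])
  also have "\<dots> = 0" by (intro sum.neutral) (simp add: midl_def step1b)
  finally show ?thesis by (simp add: midl_def)
qed

lemma midFE_all: "fst (snd (br (FF u) EE)) = 0"
  using midEF_all[of u] canti[of "FF u" EE] by simp

lemma midBE: "fst (snd (br EB EE)) = - w0"
  using canti[of EB EE] by (simp add: w0_def)

lemma gg_F1: "fst (snd Z) = 0 \<Longrightarrow> snd (snd Z) = 0 \<Longrightarrow> gg Z W = fst Z * snd (snd W)"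
  by (simp add: gg_eq dext_form_def case_prod_unfold)

lemma Smt_FF: "Smt (FF b) (FF b) = (\<Sum>b'\<in>Basis. inner (fst (snd (br (FF b) (FF b')))) (fst (snd (br (FF b) (FF b')))))"
proof -
  have a: "gg (br (FF b) EE) (br (FF b) EB) = 0"
    using gg_F1[OF midFE_all third] third by simp
  have b: "gg (br (FF b) EB) (br (FF b) EE) = 0"
    using a gg_sym by metis
  show ?thesis unfolding Smt_def sum3 using a b by (simp add: gg_self third)
qed

lemma Tt_FF: "Tt (FF b) (FF b) = - 2 * (inner w0 b * inner w0 b)
   + (\<Sum>b1\<in>Basis. \<Sum>b2\<in>Basis. inner (fst (snd (br (FF b1) (FF b2)))) b * inner (fst (snd (br (FF b1) (FF b2)))) b)"
  unfolding Tt_def sum3 by (simp add: gg_F midEF_all midFE_all midBE w0_def)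


lemma step4: "w0 = 0" "c = 0" "\<And>b1 b2. b1 \<in> Basis \<Longrightarrow> b2 \<in> Basis \<Longrightarrow> fst (snd (br (FF b1) (FF b2))) = 0"
proof -
  let ?P = "\<lambda>b1 b2. fst (snd (br (FF b1) (FF b2)))"
  define A where "A = (\<Sum>b1\<in>Basis. \<Sum>b2\<in>Basis. inner (?P b1 b2) (?P b1 b2))"
  define SQ where "SQ = (\<Sum>b\<in>Basis. Qf (FF b) (FF b))"
  have A0: "A \<ge> 0" unfolding A_def by (intro sum_nonneg) simp
  have SQ0: "SQ \<ge> 0" unfolding SQ_def Qf_def by (intro sum_nonneg qpos)
  have w0n: "inner w0 w0 \<ge> 0" by simp
  have c: "c = inner w0 w0 / 2" by (rule step3)
  have each: "ricci_form br dext_form (FF b) (FF b) = c" if "b \<in> Basis" for b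
    using that by (simp add: ein dext_form_def FF_def inner_Basis)
  have cn: "(\<Sum>b\<in>Basis. ricci_form br dext_form (FF b) (FF b)) \<ge> 0"
  proof -
    have c0: "c \<ge> 0" unfolding c by simp
    show ?thesis using c0 by (intro sum_nonneg) (simp add: each)
  qed
  have sS: "(\<Sum>b\<in>Basis. Smt (FF b) (FF b)) = A" unfolding A_def Smt_FF ..
  have sT: "(\<Sum>b\<in>Basis. Tt (FF b) (FF b)) = - 2 * inner w0 w0 + A"
  proof -
    have "(\<Sum>b\<in>Basis. Tt (FF b) (FF b)) = - 2 * (\<Sum>b\<in>Basis. inner w0 b * inner w0 b)
      + (\<Sum>b\<in>Basis. \<Sum>b1\<in>Basis. \<Sum>b2\<in>Basis. inner (?P b1 b2) b * inner (?P b1 b2) b)"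
      unfolding Tt_FF sum.distrib by (simp only: sum_distrib_left)
    also have "(\<Sum>b\<in>Basis. \<Sum>b1\<in>Basis. \<Sum>b2\<in>Basis. inner (?P b1 b2) b * inner (?P b1 b2) b)
       = (\<Sum>b1\<in>Basis. \<Sum>b2\<in>Basis. \<Sum>b\<in>Basis. inner (?P b1 b2) b * inner (?P b1 b2) b)"
      by (subst sum.swap, subst (2) sum.swap) (rule refl)
    also have "\<dots> = A" unfolding A_def by (simp add: euclidean_inner[symmetric])
    also have "(\<Sum>b\<in>Basis. inner w0 b * inner w0 b) = inner w0 w0" by (simp add: euclidean_inner[symmetric])
    finally show ?thesis .
  qed
  have "(\<Sum>b\<in>Basis. ricci_form br dext_form (FF b) (FF b))
      = (\<Sum>b\<in>Basis. - Qf (FF b) (FF b) / 2 - Smt (FF b) (FF b) / 2 + Tt (FF b) (FF b) / 4)"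
    by (simp add: ric_Qf)
  also have "\<dots> = - (\<Sum>b\<in>Basis. Qf (FF b) (FF b)) / 2 - (\<Sum>b\<in>Basis. Smt (FF b) (FF b)) / 2
      + (\<Sum>b\<in>Basis. Tt (FF b) (FF b)) / 4"
    by (simp add: sum.distrib sum_subtractf sum_divide_distrib sum_negf)
  also have "\<dots> = - SQ / 2 - A / 2 + (- 2 * inner w0 w0 + A) / 4"
    unfolding SQ_def sS sT ..
  finally have eq: "(\<Sum>b\<in>Basis. ricci_form br dext_form (FF b) (FF b)) = - SQ / 2 - A / 4 - inner w0 w0 / 2"
    by (simp add: field_simps)
  have ww: "inner w0 w0 = 0" using eq cn A0 SQ0 w0n by linarith
  then show "w0 = 0" by simp
  show "c = 0" using c ww by simp
  have "A = 0" using eq cn A0 SQ0 w0n by linarith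
  then have "\<forall>b1\<in>Basis. (\<Sum>b2\<in>Basis. inner (?P b1 b2) (?P b1 b2)) = 0"
    unfolding A_def using sum_nonneg_eq_0_iff[of Basis "\<lambda>b1. \<Sum>b2\<in>Basis. inner (?P b1 b2) (?P b1 b2)"]
    by (simp add: sum_nonneg)
  then have "\<forall>b1\<in>Basis. \<forall>b2\<in>Basis. inner (?P b1 b2) (?P b1 b2) = 0"
    using sum_nonneg_eq_0_iff[of Basis "\<lambda>b2. inner (?P b1 b2) (?P b1 b2)" for b1] by simp
  then show "\<And>b1 b2. b1 \<in> Basis \<Longrightarrow> b2 \<in> Basis \<Longrightarrow> ?P b1 b2 = 0" by simp
qed


lemma lin_comp2: "linear (\<lambda>x. f (br x y))" if "linear f" for f :: "_ \<Rightarrow> 'z::real_vector"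
  using linear_compose[OF bil_lin1[OF cbil] that] by (simp add: o_def)
lemma lin_comp3: "linear (\<lambda>x. f (br y x))" if "linear f" for f :: "_ \<Rightarrow> 'z::real_vector"
  using linear_compose[OF bil_lin2[OF cbil] that] by (simp add: o_def)

lemma midFF_all: "fst (snd (br (FF u) (FF v))) = 0"
proof -
  have a: "midl (br (FF u) (FF b')) = 0" if "b' \<in> Basis" for b' u
    by (rule FF_zero[OF lin_comp2[OF midl_lin]]) (simp add: midl_def step4(3) that)
  have "midl (br (FF u) (FF v)) = 0"
    by (rule FF_zero[OF lin_comp3[OF midl_lin]]) (simp add: a)
  then show ?thesis by (simp add: midl_def)
qed

lemma inner_EE: "inner Z EE = fst Z" by (simp add: inner_prod_def)
lemma inner_EB: "inner Z EB = snd (snd Z)" by (simp add: inner_prod_def)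
lemma inner_FF: "inner Z (FF b) = inner (fst (snd Z)) b" by (simp add: inner_prod_def FF_def)

lemma gamma0: "b \<in> Basis \<Longrightarrow> fst (br (FF b) EE) = 0"
  using cuni[of "FF b"] unfolding lin_trace_def sum3
  by (simp add: inner_EE inner_EB inner_FF third midFF_all)

lemma brEF0: "br EE (FF u) = 0"
proof -
  have f: "fst (br (FF u) EE) = 0"
    by (rule FF_zero[OF lin_comp2[OF linear_fst]]) (simp add: gamma0)
  have "fst (br EE (FF u)) = 0" using f canti[of EE "FF u"] by simp
  then show ?thesis using midEF_all[of u] third[of EE "FF u"] by (simp add: prod_eq_iff)
qed

lemma brFE0: "br (FF u) EE = 0" using brEF0[of u] canti[of "FF u" EE] by simp

definition "mu = fst (br EB EE)"
definition "Dc u = fst (snd (br EB (FF u)))"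
definition "Kc u = (\<Sum>b\<in>Basis. fst (br (FF u) (FF b)) *\<^sub>R b)"
definition "bc = (\<Sum>b\<in>Basis. fst (br EB (FF b)) *\<^sub>R b)"

lemma brBE: "br EB EE = (mu, 0, 0)"
  using midBE step4(1) third[of EB EE] by (cases "br EB EE") (simp add: mu_def)
lemma brEB: "br EE EB = (- mu, 0, 0)" using brBE canti[of EE EB] by simp

lemma lin_Dc: "linear Dc"
  unfolding Dc_def using linear_compose[OF FF_lin lin_comp3[OF midl_lin]] by (simp add: o_def midl_def)

lemma lin_fstF: "linear (\<lambda>u. fst (br y (FF u)))"
  using linear_compose[OF FF_lin lin_comp3[OF linear_fst]] by (simp add: o_def)
lemma lin_fstF1: "linear (\<lambda>u. fst (br (FF u) y))"
  using linear_compose[OF FF_lin lin_comp2[OF linear_fst]] by (simp add: o_def)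

lemma Kc_inner: "inner (Kc u) v = fst (br (FF u) (FF v))"
  unfolding Kc_def by (rule lin_repr[OF lin_fstF])
lemma bc_inner: "inner bc u = fst (br EB (FF u))"
  unfolding bc_def by (rule lin_repr[OF lin_fstF])

lemma lin_Kc: "linear Kc"
proof (rule linearI)
  fix x y show "Kc (x + y) = Kc x + Kc y"
    unfolding Kc_def by (simp add: linear_add[OF lin_fstF1] scaleR_add_left sum.distrib)
next
  fix r :: real and x show "Kc (r *\<^sub>R x) = r *\<^sub>R Kc x"
    unfolding Kc_def by (simp add: linear_scale[OF lin_fstF1] scaleR_sum_right)
qed

lemma Kc_skew: "inner (Kc u) v = - inner u (Kc v)"
  unfolding Kc_inner inner_commute[of u] using canti[of "FF u" "FF v"] by simp

lemma brFF: "br (FF u) (FF v) = (inner (Kc u) v, 0, 0)"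
  using midFF_all[of u v] third[of "FF u" "FF v"] by (cases "br (FF u) (FF v)") (simp add: Kc_inner)
lemma brBF: "br EB (FF u) = (inner bc u, Dc u, 0)"
  using third[of EB "FF u"] by (cases "br EB (FF u)") (simp add: bc_inner Dc_def)
lemma brFB: "br (FF u) EB = (- inner bc u, - Dc u, 0)"
  using brBF[of u] canti[of "FF u" EB] by simp

lemma br_is_dext: "br X Y = dext_bracket Kc Dc mu bc X Y"
proof -
  obtain a1 u1 c1 where X: "X = (a1, u1, c1)" by (cases X) auto
  obtain a2 u2 c2 where Y: "Y = (a2, u2, c2)" by (cases Y) auto
  have "br X Y = br (a1 *\<^sub>R EE + FF u1 + c1 *\<^sub>R EB) (a2 *\<^sub>R EE + FF u2 + c2 *\<^sub>R EB)"
    using decomp3[of X] decomp3[of Y] X Y by simp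
  also have "\<dots> = (mu * (c1 * a2 - a1 * c2) + c1 * inner bc u2 - c2 * inner bc u1 + inner (Kc u1) u2,
      c1 *\<^sub>R Dc u2 - c2 *\<^sub>R Dc u1, 0)"
    by (simp only: br_add_left br_add_right br_scale_left br_scale_right br_self
        brEF0 brFE0 brBE brEB brFF brBF brFB) (simp add: algebra_simps)
  finally show ?thesis by (simp add: X Y dext_bracket_def)
qed

lemma mu_trace: "mu = - lin_trace Dc"
  using cuni[of EB] unfolding lin_trace_def[of "br EB"] sum3
  by (simp add: inner_EE inner_EB inner_FF brBE brBF third lin_trace_def mu_def[symmetric])

end



lemma rb_gg:
  fixes br :: "real \<times> 'w::euclidean_space \<times> real \<Rightarrow> real \<times> 'w \<times> real \<Rightarrow> real \<times> 'w \<times> real"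
  assumes "rbase br swp"
  shows "rbase.gg (swp :: real \<times> 'w \<times> real \<Rightarrow> real \<times> 'w \<times> real) = dext_form"
proof -
  interpret r: rbase br swp by (rule assms)
  have "r.gg x y = dext_form x y" for x y
    by (cases x rule: prod_cases3; cases y rule: prod_cases3)
       (simp add: r.gg_def swp_def dext_form_def add.commute)
  then show ?thesis by (intro ext)
qed

lemma rb_LC:
  fixes br :: "real \<times> 'w::euclidean_space \<times> real \<Rightarrow> real \<times> 'w \<times> real \<Rightarrow> real \<times> 'w \<times> real"
  assumes "rbase br swp"
  shows "\<And>U V W. 2 * dext_form (levi_civita br dext_form U V) W
      = dext_form (br U V) W + dext_form (br W U) V + dext_form (br W V) U"
    and "bilinear (levi_civita br dext_form)"
proof -
  interpret r: rbase br swp by (rule assms)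
  have g: "r.gg = dext_form" using rb_gg[OF assms] .
  show "\<And>U V W. 2 * dext_form (levi_civita br dext_form U V) W
      = dext_form (br U V) W + dext_form (br W U) V + dext_form (br W V) U"
    using r.LC_prop unfolding g .
  show "bilinear (levi_civita br dext_form)" using r.LCx_bil r.LC_eq unfolding g by simp
qed

theorem theorem4p3:
  fixes br :: "'v::euclidean_space \<Rightarrow> 'v \<Rightarrow> 'v" and g :: "'v \<Rightarrow> 'v \<Rightarrow> real"
  assumes "DIM('v) = DIM('w::euclidean_space) + 2"
    and "lorentzian_lie_algebra br g"
    and "completely_solvable br"
    and "unimodular br"
    and "degenerate_on g (derived_algebra br)"
  shows "(einstein br g \<longleftrightarrow>
           (\<exists>(K::'w \<Rightarrow> 'w) D b \<phi>. admissible K D (- lin_trace D) b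
              \<and> isometric_lie_iso br g (dext_bracket K D (- lin_trace D) b) dext_form \<phi>))
         \<and> (einstein br g \<longrightarrow> ricci_flat br g)"
proof -
  note dims = assms(1)
  have lb: "lie_bracket br" and lf: "lorentzian_form g"
    using assms(2) by (auto simp: lorentzian_lie_algebra_def)
  have bb: "bilinear br" and ba: "\<And>x y. br x y = - br y x"
    and jac: "\<And>x y z. br x (br y z) + br y (br z x) + br z (br x y) = 0"
    using lb unfolding lie_bracket_def by blast+
  have gb: "bilinear g" and gs: "\<And>x y. g x y = g y x" and nd: "nondegenerate_form g"
    using lf unfolding lorentzian_form_def by blast+
  have un: "\<And>u. lin_trace (br u) = 0" using assms(4) by (simp add: unimodular_def)
  obtain e where eD: "e \<in> derived_algebra br" and e0: "e \<noteq> 0"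
    and eo: "\<And>y. y \<in> derived_algebra br \<Longrightarrow> g e y = 0"
    using assms(5) unfolding degenerate_on_def by blast
  have ee: "g e e = 0" using eo[OF eD] .
  have ebr: "g (br x y) e = 0" for x y
  proof -
    have "br x y \<in> derived_algebra br" unfolding derived_algebra_def by (rule span_base) blast
    then show ?thesis using eo gs by metis
  qed
  obtain \<phi> :: "'v \<Rightarrow> real \<times> 'w \<times> real" and \<psi> where lp: "linear \<phi>" and lq: "linear \<psi>"
    and qp: "\<And>x. \<psi> (\<phi> x) = x" and pq: "\<And>X. \<phi> (\<psi> X) = X"
    and isom: "\<And>x y. dext_form (\<phi> x) (\<phi> y) = g x y" and pe: "\<phi> e = (1, 0, 0)"
    using frame_exists[OF lf dims e0 ee] by blast
  define br' where "br' X Y = \<phi> (br (\<psi> X) (\<psi> Y))" for X Y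
  have "inj \<phi>" by (rule injI) (metis qp)
  moreover have "surj \<phi>" by (rule surjI[of _ \<psi>]) (rule pq)
  ultimately have bij: "bij \<phi>" by (simp add: bij_def)
  have hom: "\<phi> (br x y) = br' (\<phi> x) (\<phi> y)" for x y by (simp add: br'_def qp)
  have iso: "isometric_lie_iso br g br' dext_form \<phi>"
    unfolding isometric_lie_iso_def using lp bij hom isom by blast
  have bb': "bilinear br'"
    unfolding bilinear_def br'_def
  proof (intro allI conjI)
    fix x show "linear (\<lambda>y. \<phi> (br (\<psi> x) (\<psi> y)))"
      using linear_compose[OF linear_compose[OF lq bil_lin2[OF bb]] lp] by (simp add: o_def)
  next
    fix y show "linear (\<lambda>x. \<phi> (br (\<psi> x) (\<psi> y)))"
      using linear_compose[OF linear_compose[OF lq bil_lin1[OF bb]] lp] by (simp add: o_def)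
  qed
  have ba': "br' x y = - br' y x" for x y
    by (simp add: br'_def ba[of "\<psi> x"] linear_neg[OF lp])
  have jac': "br' x (br' y z) + br' y (br' z x) + br' z (br' x y) = 0" for x y z
  proof -
    have "br' x (br' y z) + br' y (br' z x) + br' z (br' x y)
        = \<phi> (br (\<psi> x) (br (\<psi> y) (\<psi> z)) + br (\<psi> y) (br (\<psi> z) (\<psi> x)) + br (\<psi> z) (br (\<psi> x) (\<psi> y)))"
      by (simp add: br'_def qp linear_add[OF lp])
    then show ?thesis by (simp add: jac linear_0[OF lp])
  qed
  have lb': "lie_bracket br'" unfolding lie_bracket_def using bb' ba' jac' by blast
  have tr: "lin_trace F = lin_trace (\<lambda>w. \<psi> (F (\<phi> w)))" if "linear F" for F
    by (rule trace_transfer[OF lp lq pq that])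
  have un': "lin_trace (br' X) = 0" for X
  proof -
    have "lin_trace (br' X) = lin_trace (\<lambda>w. \<psi> (br' X (\<phi> w)))"
      by (rule tr) (simp add: bb' bil_lin2)
    also have "\<dots> = lin_trace (br (\<psi> X))" by (simp add: br'_def qp)
    finally show ?thesis by (simp add: un)
  qed
  have qpos': "lin_trace (\<lambda>W. br' X (br' X W)) \<ge> 0" for X
  proof -
    have l: "linear (\<lambda>W. br' X (br' X W))"
      using linear_compose[OF bil_lin2[OF bb'] bil_lin2[OF bb']] by (simp add: o_def)
    have "lin_trace (\<lambda>W. br' X (br' X W)) = lin_trace (\<lambda>w. \<psi> (br' X (br' X (\<phi> w))))"
      by (rule tr[OF l])
    also have "\<dots> = lin_trace (\<lambda>w. br (\<psi> X) (br (\<psi> X) w))" by (simp add: br'_def qp)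
    finally show ?thesis using cs_sq_nonneg[OF bb assms(3)] by simp
  qed
  have third': "snd (snd (br' X Y)) = 0" for X Y
  proof -
    have "dext_form (br' X Y) (\<phi> e) = 0" unfolding br'_def isom by (rule ebr)
    then show ?thesis by (simp add: pe dext_form_def case_prod_unfold)
  qed
  have cconc: "conc br'" by (rule conc.intro[OF bb' ba' un' third' qpos'])
  interpret cc: conc br' by (rule cconc)
  have rb': "rbase br' swp" by (rule swp_rbase[OF bb' ba'])
  have transf: "ricci_form br g u v = ricci_form br' dext_form (\<phi> u) (\<phi> v)" for u v
    by (rule ric_transfer[OF iso gb nd rb_LC(1)[OF rb'] rb_LC(2)[OF rb'] bb'])
  have ein'_iff: "einstein br g \<longleftrightarrow> einstein br' dext_form"
  proof
    assume "einstein br g"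
    then obtain c where c: "\<And>u v. ricci_form br g u v = c * g u v" by (auto simp: einstein_def)
    have "ricci_form br' dext_form X Y = c * dext_form X Y" for X Y
      using transf[of "\<psi> X" "\<psi> Y"] c[of "\<psi> X" "\<psi> Y"] isom[of "\<psi> X" "\<psi> Y"] by (simp add: pq)
    then show "einstein br' dext_form" by (auto simp: einstein_def)
  next
    assume "einstein br' dext_form"
    then obtain c where c: "\<And>X Y. ricci_form br' dext_form X Y = c * dext_form X Y" by (auto simp: einstein_def)
    have "ricci_form br g u v = c * g u v" for u v using transf c isom by simp
    then show "einstein br g" by (auto simp: einstein_def)
  qed
  have fwd: "(\<exists>(K::'w \<Rightarrow> 'w) D b \<phi>. admissible K D (- lin_trace D) b
              \<and> isometric_lie_iso br g (dext_bracket K D (- lin_trace D) b) dext_form \<phi>)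
          \<and> ricci_flat br g" if E: "einstein br g"
  proof -
    obtain c where c: "\<And>X Y. ricci_form br' dext_form X Y = c * dext_form X Y"
      using E ein'_iff by (auto simp: einstein_def)
    have cein: "conc_ein br' c" using cconc c by (simp add: conc_ein_def conc_ein_axioms_def)
    interpret ce: conc_ein br' c by (rule cein)
    have eqb: "br' = dext_bracket ce.Kc ce.Dc (- lin_trace ce.Dc) ce.bc"
      by (intro ext) (simp add: ce.br_is_dext ce.mu_trace)
    have adm: "admissible ce.Kc ce.Dc (- lin_trace ce.Dc) ce.bc"
      unfolding admissible_def eqb[symmetric]
      using ce.lin_Kc ce.lin_Dc ce.Kc_skew lb' E ein'_iff by blast
    have iso2: "isometric_lie_iso br g (dext_bracket ce.Kc ce.Dc (- lin_trace ce.Dc) ce.bc) dext_form \<phi>"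
      using iso eqb by simp
    have rf: "ricci_flat br g"
      unfolding ricci_flat_def using transf c ce.step4(2) by simp
    show ?thesis using adm iso2 rf by blast
  qed
  have bwd: "einstein br g" if ex: "\<exists>(K::'w \<Rightarrow> 'w) D b \<phi>. admissible K D (- lin_trace D) b
              \<and> isometric_lie_iso br g (dext_bracket K D (- lin_trace D) b) dext_form \<phi>"
  proof -
    obtain K :: "'w \<Rightarrow> 'w" and D b \<phi>2 where adm: "admissible K D (- lin_trace D) b"
      and iso2: "isometric_lie_iso br g (dext_bracket K D (- lin_trace D) b) dext_form \<phi>2"
      using ex by blast
    let ?b2 = "dext_bracket K D (- lin_trace D) b"
    have lb2: "lie_bracket ?b2" and e2: "einstein ?b2 dext_form" using adm by (auto simp: admissible_def)
    have bb2: "bilinear ?b2" and ba2: "\<And>x y. ?b2 x y = - ?b2 y x" using lb2 unfolding lie_bracket_def by blast+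
    have rb2: "rbase ?b2 swp" by (rule swp_rbase[OF bb2 ba2])
    have tf: "ricci_form br g u v = ricci_form ?b2 dext_form (\<phi>2 u) (\<phi>2 v)" for u v
      by (rule ric_transfer[OF iso2 gb nd rb_LC(1)[OF rb2] rb_LC(2)[OF rb2] bb2])
    have isom2: "dext_form (\<phi>2 x) (\<phi>2 y) = g x y" for x y
      using iso2 by (simp add: isometric_lie_iso_def)
    obtain c where c: "\<And>X Y. ricci_form ?b2 dext_form X Y = c * dext_form X Y"
      using e2 by (auto simp: einstein_def)
    have "ricci_form br g u v = c * g u v" for u v using tf c isom2 by simp
    then show ?thesis by (auto simp: einstein_def)
  qed
  show ?thesis using fwd bwd by blast
qed


end
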